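(* Let $|\psi\rangle$ be an $N$-qubit state and $|\psi'\rangle$ an $n$-qubit state with $N\ge n$, such that $|\psi\rangle$ can be transformed into $|\psi'\rangle|0\rangle^{\otimes(N-n)}$ (with $|\psi'\rangle$ on some set of $n$ of the qubits) by stochastic local operations and classical communication (SLOCC) with non-zero probability. Then $\chi_{\mathrm{wd}}(|\psi\rangle)\ge\chi_{\mathrm{wd}}(|\psi'\rangle)$. Consequently, the Schmidt-rank width is both a type I and a type II entanglement monotone.
   Context: A subcubic tree is a tree with all vertex degrees in $\{1,3\}$; its degree-1 vertices are leaves. For an $N$-qubit state $|\psi\rangle$ on $V=\{1,\dots,N\}$, consider subcubic trees $T$ with $N$ leaves identified with the qubits; deleting an edge $e$ of $T$ induces a bipartition $(A^e_T,B^e_T)$ of $V$. Let $\chi_{A,B}(|\psi\rangle)=\mathrm{rank}(\rho_A)$, $\rho_A=\mathrm{Tr}_B|\psi\rangle\langle\psi|$ (the Schmidt rank). The Schmidt-rank width is $\chi_{\mathrm{wd}}(|\psi\rangle)=\min_T\max_{e\in T}\log_2\chi_{A^e_T,B^e_T}(|\psi\rangle)$. A type I entanglement monotone is a functional $M$ such that for every LOCC protocol on $n$ qubits mapping $|\psi\rangle$ to $n$-qubit states $|\psi_i\rangle$ with probabilities $p_i$, $M(|\psi\rangle)\ge\sum_ip_iM(|\psi_i\rangle)$. Write $|\psi\rangle\geq_{\mathrm{LOCC}}|\phi\rangle$ ($N$-qubit $|\psi\rangle$, $n$-qubit $|\phi\rangle$, $n\le N$) if for some set $A$ of $n$ qubits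 $|\psi\rangle\to|\phi\rangle^A|0\rangle^{\bar A}$ is achievable exactly with probability one by LOCC; a type II entanglement monotone is a functional $E$ on all multi-qubit states with $E(|\psi\rangle)\ge E(|\psi'\rangle)$ whenever $|\psi\rangle\geq_{\mathrm{LOCC}}|\psi'\rangle$. *)

theory Defs
  imports "HOL-Analysis.Analysis" "HOL-Library.Function_Algebras"
begin

text \<open>Qubits of an n-qubit system are labelled 0,...,n-1.  A classical configuration
  (computational basis vector) of a finite set S of qubits is an extensional function
  S ->E bool.  An n-qubit (unnormalised) vector is a map from configurations to amplitudes;
  only its values on cfg {0..<n} matter.\<close>

type_synonym config = "nat \<Rightarrow> bool"
type_synonym qvec = "config \<Rightarrow> complex"

definition cfg :: "nat set \<Rightarrow> config set" where
  "cfg S = S \<rightarrow>\<^sub>E (UNIV :: bool set)"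

definition norm2 :: "nat \<Rightarrow> qvec \<Rightarrow> real" where
  "norm2 n psi = (\<Sum>x\<in>cfg {0..<n}. (cmod (psi x))\<^sup>2)"

definition qstate :: "nat \<Rightarrow> qvec \<Rightarrow> bool" where
  "qstate n psi \<longleftrightarrow> norm2 n psi = 1"

definition merge :: "nat set \<Rightarrow> config \<Rightarrow> config \<Rightarrow> config" where
  "merge A x y = (\<lambda>i. if i \<in> A then x i else y i)"

text \<open>rho_A = Tr_B |psi><psi| for the bipartition (A, {0..<n} - A), as a kernel on cfg A.\<close>
definition rho :: "nat \<Rightarrow> nat set \<Rightarrow> qvec \<Rightarrow> config \<Rightarrow> config \<Rightarrow> complex" where
  "rho n A psi x x' =
     (if x \<in> cfg A \<and> x' \<in> cfg A then
        (\<Sum>y\<in>cfg ({0..<n} - A). psi (merge A x y) * cnj (psi (merge A x' y)))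
      else 0)"

text \<open>The rank of rho_A: the complex dimension of its column space (= range of the operator).\<close>
definition cscale :: "complex \<Rightarrow> (config \<Rightarrow> complex) \<Rightarrow> (config \<Rightarrow> complex)" where
  "cscale c f = (\<lambda>x. c * f x)"

definition schmidt_rank :: "nat \<Rightarrow> nat set \<Rightarrow> qvec \<Rightarrow> nat" where
  "schmidt_rank n A psi =
     vector_space.dim cscale {(\<lambda>x. rho n A psi x x') | x'. x' \<in> cfg A}"

text \<open>A tree with leaf labelling: vertex set, set of edges (2-element vertex sets),
  and a map from the qubits {0..<n} to the vertices.\<close>
type_synonym ltree = "nat set \<times> nat set set \<times> (nat \<Rightarrow> nat)"

definition adj :: "nat set set \<Rightarrow> (nat \<times> nat) set" where
  "adj E = {(u, v). {u, v} \<in> E}"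

definition degree :: "nat set set \<Rightarrow> nat \<Rightarrow> nat" where
  "degree E v = card {e \<in> E. v \<in> e}"

definition is_tree :: "nat set \<Rightarrow> nat set set \<Rightarrow> bool" where
  "is_tree Vt E \<longleftrightarrow> finite Vt \<and> Vt \<noteq> {} \<and>
     (\<forall>e\<in>E. e \<subseteq> Vt \<and> card e = 2) \<and>
     (\<forall>u\<in>Vt. \<forall>v\<in>Vt. (u, v) \<in> (adj E)\<^sup>*) \<and>
     card E + 1 = card Vt"

definition subcubic_tree :: "nat \<Rightarrow> ltree \<Rightarrow> bool" where
  "subcubic_tree n T = (case T of (Vt, E, lf) \<Rightarrow>
     is_tree Vt E \<and> (\<forall>v\<in>Vt. degree E v \<in> {1, 3}) \<and>
     bij_betw lf {0..<n} {v \<in> Vt. degree E v = 1})"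

definition tree_edges :: "ltree \<Rightarrow> nat set set" where
  "tree_edges T = fst (snd T)"

text \<open>Deleting edge e splits the tree in two components; A^e_T is the set of qubits whose
  leaf lies in the component of the endpoint Min e (the complementary side gives the same
  Schmidt rank).\<close>
definition cut_side :: "nat \<Rightarrow> ltree \<Rightarrow> nat set \<Rightarrow> nat set" where
  "cut_side n T e = (case T of (Vt, E, lf) \<Rightarrow>
     {i \<in> {0..<n}. (Min e, lf i) \<in> (adj (E - {e}))\<^sup>*})"

text \<open>Schmidt-rank width (defined for n >= 2, where subcubic trees with n leaves exist).\<close>
definition srw :: "nat \<Rightarrow> qvec \<Rightarrow> real" where
  "srw n psi = Min {Max {log 2 (real (schmidt_rank n (cut_side n T e) psi)) | e. e \<in> tree_edges T}
                    | T. subcubic_tree n T}"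

type_synonym op1 = "bool \<Rightarrow> bool \<Rightarrow> complex"

definition apply_prod :: "nat \<Rightarrow> (nat \<Rightarrow> op1) \<Rightarrow> qvec \<Rightarrow> qvec" where
  "apply_prod N K psi =
     (\<lambda>x. \<Sum>y\<in>cfg {0..<N}. (\<Prod>i<N. K i (x i) (y i)) * psi y)"

text \<open>The N-qubit vector |psi'>^S |0>^{rest}: the n-qubit state psi' placed on the qubits
  sg 0, ..., sg (n-1) (sg a bijection from {0..<n} onto S), all other qubits in |0>
  (bit value False).\<close>
definition embed :: "nat \<Rightarrow> nat \<Rightarrow> (nat \<Rightarrow> nat) \<Rightarrow> qvec \<Rightarrow> qvec" where
  "embed N n sg psi' =
     (\<lambda>x. if (\<forall>i\<in>{0..<N} - sg ` {0..<n}. x i = False)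
          then psi' (restrict (\<lambda>j. x (sg j)) {0..<n}) else 0)"

definition slocc_to :: "nat \<Rightarrow> qvec \<Rightarrow> nat \<Rightarrow> qvec \<Rightarrow> bool" where
  "slocc_to N psi n psi' \<longleftrightarrow>
     (\<exists>K sg c. c \<noteq> 0 \<and> inj_on sg {0..<n} \<and> sg ` {0..<n} \<subseteq> {0..<N} \<and>
        (\<forall>x\<in>cfg {0..<N}. apply_prod N K psi x = c * embed N n sg psi' x))"

definition apply_local :: "nat \<Rightarrow> op1 \<Rightarrow> qvec \<Rightarrow> qvec" where
  "apply_local k K psi = (\<lambda>x. \<Sum>b\<in>(UNIV :: bool set). K (x k) b * psi (x(k := b)))"

definition kraus_complete :: "op1 list \<Rightarrow> bool" where
  "kraus_complete Ks \<longleftrightarrow>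
     (\<forall>a b. (\<Sum>K\<leftarrow>Ks. \<Sum>c\<in>(UNIV :: bool set). cnj (K c a) * K c b) = (if a = b then 1 else 0))"

definition normalize :: "nat \<Rightarrow> qvec \<Rightarrow> qvec" where
  "normalize n v = (\<lambda>x. v x / complex_of_real (sqrt (norm2 n v)))"

text \<open>locc n psi L: L is the list of (probability, post-measurement state) outcomes of a
  (finite-round) LOCC protocol on n qubits started in psi.  In each round one party (qubit k)
  performs a local measurement with Kraus operators Ks, announces the outcome j, and the
  rest of the protocol may depend on all previous outcomes.\<close>
inductive locc :: "nat \<Rightarrow> qvec \<Rightarrow> (real \<times> qvec) list \<Rightarrow> bool" for n where
  locc_stop: "qstate n psi \<Longrightarrow> locc n psi [(1, psi)]"
| locc_round: "\<lbrakk> qstate n psi; k < n; kraus_complete Ks;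
     \<forall>j<length Ks. norm2 n (apply_local k (Ks ! j) psi) > 0 \<longrightarrow>
        locc n (normalize n (apply_local k (Ks ! j) psi)) (Ls j) \<rbrakk>
   \<Longrightarrow> locc n psi
        (concat (map (\<lambda>j. if norm2 n (apply_local k (Ks ! j) psi) > 0
                          then map (\<lambda>(q, phi). (norm2 n (apply_local k (Ks ! j) psi) * q, phi)) (Ls j)
                          else []) [0..<length Ks]))"

text \<open>psi >=_LOCC psi': some LOCC protocol turns psi into psi'|0>^{rest} (up to an irrelevant
  global phase) in every branch, i.e. exactly with probability one.\<close>
definition locc_geq :: "nat \<Rightarrow> qvec \<Rightarrow> nat \<Rightarrow> qvec \<Rightarrow> bool" where
  "locc_geq N psi n psi' \<longleftrightarrow>
     n \<le> N \<and> (\<exists>sg L. inj_on sg {0..<n} \<and> sg ` {0..<n} \<subseteq> {0..<N} \<and> locc N psi L \<and>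
        (\<forall>(p, phi)\<in>set L. \<exists>c. cmod c = 1 \<and>
            (\<forall>x\<in>cfg {0..<N}. phi x = c * embed N n sg psi' x)))"

text \<open>Functionals on multi-qubit states are maps M n psi.  Since the Schmidt-rank width is only
  defined for at least two qubits, the monotone conditions are required for n >= 2.\<close>
definition type_I_monotone :: "(nat \<Rightarrow> qvec \<Rightarrow> real) \<Rightarrow> bool" where
  "type_I_monotone M \<longleftrightarrow>
     (\<forall>n psi L. 2 \<le> n \<longrightarrow> locc n psi L \<longrightarrow>
        M n psi \<ge> (\<Sum>(p, phi)\<leftarrow>L. p * M n phi))"

definition type_II_monotone :: "(nat \<Rightarrow> qvec \<Rightarrow> real) \<Rightarrow> bool" where
  "type_II_monotone E \<longleftrightarrow>
     (\<forall>N psi n psi'. 2 \<le> n \<longrightarrow> qstate N psi \<longrightarrow> qstate n psi' \<longrightarrow> locc_geq N psi n psi' \<longrightarrow>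
        E N psi \<ge> E n psi')"

end

theory Submission
  imports Defs
begin

interpretation cs: vector_space cscale
  by unfold_locales (auto simp: cscale_def fun_eq_iff algebra_simps)

lemma sum_fun_apply: "(\<Sum>k\<in>K. (f k :: 'a \<Rightarrow> 'b::comm_monoid_add)) x = (\<Sum>k\<in>K. f k x)"
  by (induction K rule: infinite_finite_induct) auto

definition has_dec :: "nat \<Rightarrow> nat set \<Rightarrow> qvec \<Rightarrow> nat \<Rightarrow> bool" where
  "has_dec n A v r \<longleftrightarrow> (\<exists>a b. \<forall>x\<in>cfg A. \<forall>y\<in>cfg ({0..<n} - A).
      v (merge A x y) = (\<Sum>k<r. a k x * b k y))"

lemma finite_cfg: "finite S \<Longrightarrow> finite (cfg S)"
  unfolding cfg_def by (intro finite_PiE) auto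

lemma R1:
  assumes "has_dec n A v r"
  shows "schmidt_rank n A v \<le> r"
proof -
  obtain a b where ab: "\<And>x y. x\<in>cfg A \<Longrightarrow> y\<in>cfg ({0..<n} - A) \<Longrightarrow>
      v (merge A x y) = (\<Sum>k<r. a k x * b k y)"
    using assms unfolding has_dec_def by blast
  define a' where "a' k = (\<lambda>x. if x \<in> cfg A then a k x else 0)" for k
  let ?B = "cfg ({0..<n} - A)"
  have col: "(\<lambda>x. rho n A v x x') \<in> cs.span (a' ` {..<r})" if x': "x' \<in> cfg A" for x'
  proof -
    define c where "c k = (\<Sum>y\<in>?B. b k y * cnj (v (merge A x' y)))" for k
    have "(\<lambda>x. rho n A v x x') = (\<Sum>k<r. cscale (c k) (a' k))"
    proof
      fix x
      show "rho n A v x x' = (\<Sum>k<r. cscale (c k) (a' k)) x"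
      proof (cases "x \<in> cfg A")
        case True
        have "rho n A v x x' = (\<Sum>y\<in>?B. (\<Sum>k<r. a k x * b k y) * cnj (v (merge A x' y)))"
          using True x' by (simp add: rho_def ab)
        also have "\<dots> = (\<Sum>k<r. a k x * c k)"
          by (simp add: c_def sum_distrib_left sum_distrib_right mult.assoc sum.swap[of _ "{..<r}"])
        also have "\<dots> = (\<Sum>k<r. cscale (c k) (a' k)) x"
          using True by (simp add: sum_fun_apply cscale_def a'_def mult.commute)
        finally show ?thesis .
      next
        case False
        then show ?thesis by (simp add: rho_def sum_fun_apply cscale_def a'_def)
      qed
    qed
    also have "\<dots> \<in> cs.span (a' ` {..<r})"
      by (intro cs.span_sum cs.span_scale cs.span_base) auto
    finally show ?thesis .
  qed
  have "schmidt_rank n A v \<le> card (a' ` {..<r})"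
    unfolding schmidt_rank_def
    by (rule cs.dim_le_card) (use col in auto)
  also have "\<dots> \<le> r" using card_image_le[of "{..<r}" a'] by simp
  finally show ?thesis .
qed

definition ip :: "nat set \<Rightarrow> (config \<Rightarrow> complex) \<Rightarrow> (config \<Rightarrow> complex) \<Rightarrow> complex" where
  "ip A f g = (\<Sum>x\<in>cfg A. cnj (f x) * g x)"

lemma ip_span:
  assumes "h' \<in> cs.span S" "\<And>s. s \<in> S \<Longrightarrow> ip A s h = 0"
  shows "ip A h' h = 0"
  using assms(1)
proof (induction rule: cs.span_induct_alt)
  case base then show ?case by (simp add: ip_def)
next
  case (step c x y)
  have "ip A (cscale c x + y) h = cnj c * ip A x h + ip A y h"
    by (simp add: ip_def cscale_def sum.distrib sum_distrib_left algebra_simps)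
  then show ?case using step(1,2) assms(2) by (metis add.right_neutral mult_zero_right)
qed

lemma ip_self_zero:
  assumes "finite A" "ip A f f = 0" "x \<in> cfg A"
  shows "f x = 0"
proof -
  have e: "cnj (f x) * f x = complex_of_real ((cmod (f x))\<^sup>2)" for x
    using complex_norm_square[of "f x"] by (simp add: mult.commute)
  have "ip A f f = complex_of_real (\<Sum>x\<in>cfg A. (cmod (f x))\<^sup>2)"
    unfolding ip_def e of_real_sum by simp
  then have "(\<Sum>x\<in>cfg A. (cmod (f x))\<^sup>2) = 0" using assms(2) by (metis of_real_eq_0_iff)
  then have "\<forall>x\<in>cfg A. (cmod (f x))\<^sup>2 = 0"
    using sum_nonneg_eq_0_iff[of "cfg A" "\<lambda>x. (cmod (f x))\<^sup>2"] finite_cfg[OF assms(1)] by simp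
  then show ?thesis using assms(3) by simp
qed

lemma PROJ:
  assumes "finite S" "finite A"
  shows "\<exists>p\<in>cs.span S. \<forall>s\<in>S. ip A s (g - p) = 0"
  using assms(1)
proof (induction S arbitrary: g rule: finite_induct)
  case empty
  then show ?case by (auto intro: cs.span_zero)
next
  case (insert s S)
  obtain ps where ps: "ps \<in> cs.span S" "\<And>s'. s' \<in> S \<Longrightarrow> ip A s' (s - ps) = 0"
    using insert.IH[of s] by blast
  obtain p0 where p0: "p0 \<in> cs.span S" "\<And>s'. s' \<in> S \<Longrightarrow> ip A s' (g - p0) = 0"
    using insert.IH[of g] by blast
  define r where "r = s - ps"
  have spS: "cs.span S \<subseteq> cs.span (insert s S)" by (rule cs.span_mono) auto
  have r_sp: "r \<in> cs.span (insert s S)"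
    unfolding r_def using cs.span_diff[OF cs.span_base[of s "insert s S"] subsetD[OF spS ps(1)]] by simp
  have rS: "ip A s' r = 0" if "s' \<in> S" for s' using ps(2) that r_def by simp
  have s_eq: "s = r + ps" by (simp add: r_def)
  show ?case
  proof (cases "ip A r r = 0")
    case True
    have r0: "ip A r h = 0" for h
      using ip_self_zero[OF assms(2) True] by (simp add: ip_def)
    have "ip A s (g - p0) = ip A r (g - p0) + ip A ps (g - p0)"
      unfolding ip_def sum.distrib[symmetric] by (rule sum.cong) (auto simp: s_eq algebra_simps)
    also have "\<dots> = 0" using r0 ip_span[OF ps(1) p0(2)] by simp
    finally have "ip A s (g - p0) = 0" .
    then show ?thesis using p0 spS by blast
  next
    case False
    define c where "c = ip A r (g - p0) / ip A r r"
    define p where "p = p0 + cscale c r"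
    have gen: "ip A f (g - p) = ip A f (g - p0) - c * ip A f r" for f
      by (simp add: p_def ip_def cscale_def sum_subtractf sum_distrib_left sum.distrib algebra_simps)
    have p_sp: "p \<in> cs.span (insert s S)"
      unfolding p_def using spS p0(1) r_sp by (intro cs.span_add cs.span_scale) auto
    have oS: "ip A s' (g - p) = 0" if "s' \<in> S" for s'
      using gen[of s'] p0(2)[OF that] rS[OF that] by simp
    have e1: "ip A s (g - p) = ip A r (g - p) + ip A ps (g - p)"
      unfolding ip_def sum.distrib[symmetric] by (rule sum.cong) (auto simp: s_eq algebra_simps)
    have e2: "ip A ps (g - p) = 0" using ip_span[OF ps(1) oS] by simp
    have e3: "ip A r (g - p) = 0" using gen[of r] False by (simp add: c_def)
    have "ip A s (g - p) = 0" using e1 e2 e3 by (simp only: add_0)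
    then show ?thesis using oS p_sp by blast
  qed
qed

lemma span_vanish:
  assumes "f \<in> cs.span C" "\<And>c x. c \<in> C \<Longrightarrow> x \<notin> X \<Longrightarrow> c x = 0" "x \<notin> X"
  shows "f x = 0"
  using assms(1)
proof (induction rule: cs.span_induct_alt)
  case base then show ?case by simp
next
  case (step c y z)
  then show ?case using assms(2,3) by (simp add: cscale_def)
qed

lemma cols_eq: "{(\<lambda>x. rho n A v x x') | x'. x' \<in> cfg A} = (\<lambda>x'. \<lambda>x. rho n A v x x') ` cfg A"
  by auto

lemma K:
  assumes A: "A \<subseteq> {0..<n}" and y: "y \<in> cfg ({0..<n} - A)"
  shows "(\<lambda>x. if x \<in> cfg A then v (merge A x y) else 0) \<in> cs.span ((\<lambda>x'. \<lambda>x. rho n A v x x') ` cfg A)"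
proof -
  let ?B = "{0..<n} - A"
  let ?C = "(\<lambda>x'. \<lambda>x. rho n A v x x') ` cfg A"
  define Psi where "Psi x y' = v (merge A x y')" for x y'
  define psi where "psi y' = (\<lambda>x. if x \<in> cfg A then Psi x y' else 0)" for y'
  have finA: "finite A" using A finite_subset by blast
  have finB: "finite ?B" by simp
  have finC: "finite ?C" using finite_cfg[OF finA] by simp
  obtain p where p: "p \<in> cs.span ?C" "\<And>s. s \<in> ?C \<Longrightarrow> ip A s (psi y - p) = 0"
    using PROJ[OF finC finA, of "psi y"] by blast
  define h where "h = psi y - p"
  have orth: "ip A (\<lambda>x. rho n A v x x') h = 0" if "x' \<in> cfg A" for x'
    using p(2) that h_def by auto
  define t where "t y' = ip A (psi y') h" for y'
  have c1: "(\<Sum>y'\<in>cfg ?B. Psi x' y' * t y') = 0" if x': "x' \<in> cfg A" for x'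
  proof -
    have "ip A (\<lambda>x. rho n A v x x') h = (\<Sum>x\<in>cfg A. (\<Sum>y'\<in>cfg ?B. cnj (Psi x y') * Psi x' y') * h x)"
      unfolding ip_def by (rule sum.cong) (auto simp: rho_def x' Psi_def cnj_sum)
    also have "\<dots> = (\<Sum>y'\<in>cfg ?B. Psi x' y' * t y')"
      by (simp add: t_def ip_def psi_def sum_distrib_left sum_distrib_right sum.swap[of _ "cfg A"] algebra_simps)
    finally show ?thesis using orth[OF x'] by simp
  qed
  have "ip ?B t t = (\<Sum>y'\<in>cfg ?B. (\<Sum>x\<in>cfg A. Psi x y' * cnj (h x)) * t y')"
    unfolding ip_def by (rule sum.cong) (auto simp: t_def ip_def psi_def cnj_sum)
  also have "\<dots> = (\<Sum>x\<in>cfg A. cnj (h x) * (\<Sum>y'\<in>cfg ?B. Psi x y' * t y'))"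
    by (simp add: sum_distrib_left sum_distrib_right sum.swap[of _ "cfg A"] algebra_simps)
  also have "\<dots> = 0" using c1 by simp
  finally have tt: "ip ?B t t = 0" .
  have ty: "t y = 0" using ip_self_zero[OF finB tt y] .
  have pz: "ip A p h = 0" using ip_span[OF p(1)] p(2) h_def by blast
  have "ip A h h = ip A (psi y) h - ip A p h"
    unfolding ip_def sum_subtractf[symmetric] by (rule sum.cong) (auto simp: h_def algebra_simps)
  also have "\<dots> = 0" using ty pz by (simp add: t_def)
  finally have hh: "ip A h h = 0" .
  have "psi y = p"
  proof
    fix x
    show "psi y x = p x"
    proof (cases "x \<in> cfg A")
      case True
      then show ?thesis using ip_self_zero[OF finA hh True] by (simp add: h_def)
    next
      case False
      have "p x = 0" by (rule span_vanish[OF p(1) _ False]) (auto simp: rho_def)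
      then show ?thesis using False by (simp add: psi_def)
    qed
  qed
  moreover have "psi y = (\<lambda>x. if x \<in> cfg A then v (merge A x y) else 0)"
    unfolding psi_def Psi_def by (rule refl)
  ultimately show ?thesis using p(1) by simp
qed

lemma R2:
  assumes A: "A \<subseteq> {0..<n}"
  shows "has_dec n A v (schmidt_rank n A v)"
proof -
  let ?C = "(\<lambda>x'. \<lambda>x. rho n A v x x') ` cfg A"
  have finA: "finite A" using A finite_subset by blast
  have finC: "finite ?C" using finite_cfg[OF finA] by simp
  obtain Bs where Bs: "Bs \<subseteq> ?C" "cs.independent Bs" "?C \<subseteq> cs.span Bs" "card Bs = cs.dim ?C"
    using cs.basis_exists by blast
  have finBs: "finite Bs" using Bs(1) finC finite_subset by blast
  have sr: "schmidt_rank n A v = card Bs" unfolding schmidt_rank_def cols_eq Bs(4) ..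
  obtain f where f: "bij_betw f {0..<card Bs} Bs" using ex_bij_betw_nat_finite[OF finBs] by blast
  have spC: "cs.span ?C \<subseteq> cs.span Bs"
    using Bs(3) cs.span_mono cs.span_span by blast
  have "\<forall>y\<in>cfg ({0..<n} - A). \<exists>u. (\<lambda>x. if x \<in> cfg A then v (merge A x y) else 0) = (\<Sum>w\<in>Bs. cscale (u w) w)"
  proof
    fix y assume y: "y \<in> cfg ({0..<n} - A)"
    have "(\<lambda>x. if x \<in> cfg A then v (merge A x y) else 0) \<in> cs.span Bs"
      using K[OF A y] spC by blast
    then show "\<exists>u. (\<lambda>x. if x \<in> cfg A then v (merge A x y) else 0) = (\<Sum>w\<in>Bs. cscale (u w) w)"
      unfolding cs.span_finite[OF finBs] by blast
  qed
  from bchoice[OF this] obtain U where U0: "\<forall>y\<in>cfg ({0..<n} - A).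
      (\<lambda>x. if x \<in> cfg A then v (merge A x y) else 0) = (\<Sum>w\<in>Bs. cscale (U y w) w)"
    by blast
  have U: "(\<lambda>x. if x \<in> cfg A then v (merge A x y) else 0) = (\<Sum>w\<in>Bs. cscale (U y w) w)"
    if "y \<in> cfg ({0..<n} - A)" for y using U0 that by blast
  show ?thesis unfolding has_dec_def sr
  proof (intro exI ballI)
    fix x y assume x: "x \<in> cfg A" and y: "y \<in> cfg ({0..<n} - A)"
    have "v (merge A x y) = (\<Sum>w\<in>Bs. cscale (U y w) w) x"
      using fun_cong[OF U[OF y], of x] x by simp
    also have "\<dots> = (\<Sum>w\<in>Bs. U y w * w x)" by (simp add: sum_fun_apply cscale_def)
    also have "\<dots> = (\<Sum>k<card Bs. U y (f k) * f k x)"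
      using sum.reindex_bij_betw[OF f, of "\<lambda>w. U y w * w x"] by (simp add: lessThan_atLeast0)
    finally show "v (merge A x y) = (\<Sum>k<card Bs. (\<lambda>k x. f k x) k x * (\<lambda>k y. U y (f k)) k y)" by (simp add: mult.commute)
  qed
qed

lemma rank_mono_dec:
  assumes "A \<subseteq> {0..<n}" "\<And>r. has_dec n A v r \<Longrightarrow> has_dec n A w r"
  shows "schmidt_rank n A w \<le> schmidt_rank n A v"
  using R1[OF assms(2)[OF R2[OF assms(1)]]] .

lemma cfg_iff: "x \<in> cfg S \<longleftrightarrow> (\<forall>i. i \<notin> S \<longrightarrow> x i = undefined)"
  unfolding cfg_def by (auto simp: PiE_iff extensional_def)

lemma merge_cfg: "A \<subseteq> S \<Longrightarrow> x \<in> cfg A \<Longrightarrow> y \<in> cfg (S - A) \<Longrightarrow> merge A x y \<in> cfg S"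
  unfolding cfg_iff merge_def by auto

lemma merge_swap: "A \<subseteq> S \<Longrightarrow> x \<in> cfg A \<Longrightarrow> y \<in> cfg (S - A) \<Longrightarrow> merge A x y = merge (S - A) y x"
  unfolding cfg_iff merge_def by (auto simp: fun_eq_iff)

lemma D_sym:
  assumes A: "A \<subseteq> {0..<n}" and d: "has_dec n A v r"
  shows "has_dec n ({0..<n} - A) v r"
proof -
  obtain a b where ab: "\<And>x y. x\<in>cfg A \<Longrightarrow> y\<in>cfg ({0..<n} - A) \<Longrightarrow>
      v (merge A x y) = (\<Sum>k<r. a k x * b k y)"
    using d unfolding has_dec_def by blast
  have e: "{0..<n} - ({0..<n} - A) = A" using A by auto
  show ?thesis unfolding has_dec_def e
  proof (intro exI ballI)
    fix x y assume x: "x \<in> cfg ({0..<n} - A)" and y: "y \<in> cfg A"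
    have "merge ({0..<n} - A) x y = merge A y x" using merge_swap[OF A y x] by simp
    then show "v (merge ({0..<n} - A) x y) = (\<Sum>k<r. b k x * a k y)"
      using ab[OF y x] by (simp add: mult.commute)
  qed
qed

lemma rank_sym:
  assumes A: "A \<subseteq> {0..<n}"
  shows "schmidt_rank n ({0..<n} - A) v = schmidt_rank n A v"
proof -
  have e: "{0..<n} - ({0..<n} - A) = A" using A by auto
  have 1: "schmidt_rank n ({0..<n} - A) v \<le> schmidt_rank n A v"
    using R1[OF D_sym[OF A R2[OF A]]] .
  have 2: "schmidt_rank n A v \<le> schmidt_rank n ({0..<n} - A) v"
    using R1[OF D_sym[OF _ R2, of "{0..<n} - A" n v]] e by auto
  show ?thesis using 1 2 by simp
qed

lemma D_cong:
  assumes A: "A \<subseteq> {0..<n}" and eq: "\<And>z. z \<in> cfg {0..<n} \<Longrightarrow> w z = v z" and d: "has_dec n A v r"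
  shows "has_dec n A w r"
  using d merge_cfg[OF A] eq unfolding has_dec_def by metis

lemma D_scale:
  assumes d: "has_dec n A v r"
  shows "has_dec n A (\<lambda>z. c * v z) r"
proof -
  obtain a b where ab: "\<And>x y. x\<in>cfg A \<Longrightarrow> y\<in>cfg ({0..<n} - A) \<Longrightarrow>
      v (merge A x y) = (\<Sum>k<r. a k x * b k y)"
    using d unfolding has_dec_def by blast
  show ?thesis unfolding has_dec_def
  proof (intro exI ballI)
    fix x y assume x: "x \<in> cfg A" and y: "y \<in> cfg ({0..<n} - A)"
    show "c * v (merge A x y) = (\<Sum>k<r. (\<lambda>k x. c * a k x) k x * b k y)"
      using ab[OF x y] by (simp add: sum_distrib_left mult.assoc)
  qed
qed

lemma D_local:
  assumes A: "A \<subseteq> {0..<n}" and k: "k < n" and d: "has_dec n A v r"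
  shows "has_dec n A (apply_local k K v) r"
proof -
  obtain a b where ab: "\<And>x y. x\<in>cfg A \<Longrightarrow> y\<in>cfg ({0..<n} - A) \<Longrightarrow>
      v (merge A x y) = (\<Sum>k<r. a k x * b k y)"
    using d unfolding has_dec_def by blast
  show ?thesis
  proof (cases "k \<in> A")
    case True
    show ?thesis unfolding has_dec_def
    proof (intro exI ballI)
      fix x y assume x: "x \<in> cfg A" and y: "y \<in> cfg ({0..<n} - A)"
      have m: "(merge A x y)(k := c) = merge A (x(k := c)) y" for c
        using True by (auto simp: merge_def fun_eq_iff)
      have xc: "x(k := c) \<in> cfg A" for c using x True by (auto simp: cfg_iff)
      have "apply_local k K v (merge A x y) = (\<Sum>c\<in>UNIV. K (x k) c * (\<Sum>j<r. a j (x(k := c)) * b j y))"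
        unfolding apply_local_def m using ab[OF xc y] True by (simp add: merge_def)
      also have "\<dots> = (\<Sum>j<r. (\<Sum>c\<in>UNIV. K (x k) c * a j (x(k := c))) * b j y)"
        by (simp add: sum_distrib_left sum_distrib_right sum.swap[of _ UNIV] mult.assoc)
      finally show "apply_local k K v (merge A x y) =
          (\<Sum>j<r. (\<lambda>j x. \<Sum>c\<in>UNIV. K (x k) c * a j (x(k := c))) j x * b j y)" by simp
    qed
  next
    case False
    show ?thesis unfolding has_dec_def
    proof (intro exI ballI)
      fix x y assume x: "x \<in> cfg A" and y: "y \<in> cfg ({0..<n} - A)"
      have m: "(merge A x y)(k := c) = merge A x (y(k := c))" for c
        using False by (auto simp: merge_def fun_eq_iff)
      have yc: "y(k := c) \<in> cfg ({0..<n} - A)" for c using y False k by (auto simp: cfg_iff)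
      have "apply_local k K v (merge A x y) = (\<Sum>c\<in>UNIV. K (y k) c * (\<Sum>j<r. a j x * b j (y(k := c))))"
        unfolding apply_local_def m using ab[OF x yc] False by (simp add: merge_def)
      also have "\<dots> = (\<Sum>j<r. a j x * (\<Sum>c\<in>UNIV. K (y k) c * b j (y(k := c))))"
        by (simp add: sum_distrib_left sum.swap[of _ UNIV] algebra_simps)
      finally show "apply_local k K v (merge A x y) =
          (\<Sum>j<r. a j x * (\<lambda>j y. \<Sum>c\<in>UNIV. K (y k) c * b j (y(k := c))) j y)" by simp
    qed
  qed
qed

lemma merge_bij:
  assumes A: "A \<subseteq> S"
  shows "bij_betw (\<lambda>(x, y). merge A x y) (cfg A \<times> cfg (S - A)) (cfg S)"
proof (rule bij_betwI')
  fix p q assume p: "p \<in> cfg A \<times> cfg (S - A)" and q: "q \<in> cfg A \<times> cfg (S - A)"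
  obtain x y where pxy: "p = (x, y)" by (cases p)
  obtain x' y' where qxy: "q = (x', y')" by (cases q)
  show "((case p of (x, y) \<Rightarrow> merge A x y) = (case q of (x, y) \<Rightarrow> merge A x y)) = (p = q)"
  proof
    assume e: "(case p of (x, y) \<Rightarrow> merge A x y) = (case q of (x, y) \<Rightarrow> merge A x y)"
    have "x = x'"
    proof
      fix i show "x i = x' i"
        using fun_cong[OF e, of i] p q pxy qxy by (cases "i \<in> A") (auto simp: merge_def cfg_iff)
    qed
    moreover have "y = y'"
    proof
      fix i show "y i = y' i"
        using fun_cong[OF e, of i] p q pxy qxy by (cases "i \<in> A"; cases "i \<in> S") (auto simp: merge_def cfg_iff)
    qed
    ultimately show "p = q" using pxy qxy by simp
  qed simp
next
  fix p assume "p \<in> cfg A \<times> cfg (S - A)"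
  then show "(case p of (x, y) \<Rightarrow> merge A x y) \<in> cfg S" using merge_cfg[OF A] by auto
next
  fix z assume z: "z \<in> cfg S"
  show "\<exists>p\<in>cfg A \<times> cfg (S - A). z = (case p of (x, y) \<Rightarrow> merge A x y)"
  proof (intro bexI)
    show "z = (case (restrict z A, restrict z (S - A)) of (x, y) \<Rightarrow> merge A x y)"
      using z A by (auto simp: merge_def cfg_iff fun_eq_iff)
    show "(restrict z A, restrict z (S - A)) \<in> cfg A \<times> cfg (S - A)"
      by (auto simp: cfg_def)
  qed
qed

lemma SPLIT:
  assumes A: "A \<subseteq> S" and S: "finite S"
  shows "(\<Sum>z\<in>cfg S. F z) = (\<Sum>x\<in>cfg A. \<Sum>y\<in>cfg (S - A). F (merge A x y))"
proof -
  have "(\<Sum>z\<in>cfg S. F z) = (\<Sum>p\<in>cfg A \<times> cfg (S - A). F (case p of (x, y) \<Rightarrow> merge A x y))"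
    using sum.reindex_bij_betw[OF merge_bij[OF A], of F] by simp
  also have "\<dots> = (\<Sum>x\<in>cfg A. \<Sum>y\<in>cfg (S - A). F (merge A x y))"
    by (subst sum.cartesian_product) (simp add: split_def)
  finally show ?thesis .
qed

lemma D_prod:
  assumes A: "A \<subseteq> {0..<N}" and d: "has_dec N A v r"
  shows "has_dec N A (apply_prod N K v) r"
proof -
  obtain a b where ab: "\<And>x y. x\<in>cfg A \<Longrightarrow> y\<in>cfg ({0..<N} - A) \<Longrightarrow>
      v (merge A x y) = (\<Sum>k<r. a k x * b k y)"
    using d unfolding has_dec_def by blast
  let ?B = "{0..<N} - A"
  define PA where "PA x x' = (\<Prod>i\<in>A. K i (x i) (x' i))" for x x'
  define PB where "PB y y' = (\<Prod>i\<in>?B. K i (y i) (y' i))" for y y'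
  have finA: "finite A" using A finite_subset by blast
  show ?thesis unfolding has_dec_def
  proof (intro exI ballI)
    fix x y assume x: "x \<in> cfg A" and y: "y \<in> cfg ?B"
    have pr: "(\<Prod>i<N. K i (merge A x y i) (merge A x' y' i)) = PA x x' * PB y y'" for x' y'
    proof -
      have u: "{..<N} = A \<union> ?B" using A by auto
      have "(\<Prod>i<N. K i (merge A x y i) (merge A x' y' i)) =
          (\<Prod>i\<in>A. K i (merge A x y i) (merge A x' y' i)) * (\<Prod>i\<in>?B. K i (merge A x y i) (merge A x' y' i))"
        unfolding u by (rule prod.union_disjoint) (use finA in auto)
      also have "\<dots> = PA x x' * PB y y'"
        unfolding PA_def PB_def by (intro arg_cong2[where f = "(*)"] prod.cong) (auto simp: merge_def)
      finally show ?thesis .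
    qed
    have "apply_prod N K v (merge A x y) =
        (\<Sum>x'\<in>cfg A. \<Sum>y'\<in>cfg ?B. (\<Prod>i<N. K i (merge A x y i) (merge A x' y' i)) * v (merge A x' y'))"
      unfolding apply_prod_def using SPLIT[OF A, of "\<lambda>z. (\<Prod>i<N. K i (merge A x y i) (z i)) * v z"]
      by simp
    also have "\<dots> = (\<Sum>x'\<in>cfg A. \<Sum>y'\<in>cfg ?B. PA x x' * PB y y' * (\<Sum>k<r. a k x' * b k y'))"
      by (intro sum.cong refl) (simp add: pr ab)
    also have "\<dots> = (\<Sum>x'\<in>cfg A. \<Sum>y'\<in>cfg ?B. \<Sum>k<r. (PA x x' * a k x') * (PB y y' * b k y'))"
      by (intro sum.cong refl) (simp add: sum_distrib_left mult_ac)
    also have "\<dots> = (\<Sum>x'\<in>cfg A. \<Sum>k<r. \<Sum>y'\<in>cfg ?B. (PA x x' * a k x') * (PB y y' * b k y'))"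
      by (intro sum.cong refl) (rule sum.swap)
    also have "\<dots> = (\<Sum>k<r. \<Sum>x'\<in>cfg A. \<Sum>y'\<in>cfg ?B. (PA x x' * a k x') * (PB y y' * b k y'))"
      by (rule sum.swap)
    also have "\<dots> = (\<Sum>k<r. (\<Sum>x'\<in>cfg A. PA x x' * a k x') * (\<Sum>y'\<in>cfg ?B. PB y y' * b k y'))"
      by (intro sum.cong refl) (simp add: sum_product)
    finally show "apply_prod N K v (merge A x y) =
        (\<Sum>k<r. (\<lambda>k x. \<Sum>x'\<in>cfg A. PA x x' * a k x') k x * (\<lambda>k y. \<Sum>y'\<in>cfg ?B. PB y y' * b k y') k y)"
      by simp
  qed
qed

lemma D_embed:
  assumes sg: "inj_on sg {0..<n}" "sg ` {0..<n} \<subseteq> {0..<N}" and A: "A \<subseteq> {0..<N}"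
    and d: "has_dec N A (embed N n sg psi') r"
  shows "has_dec n {j\<in>{0..<n}. sg j \<in> A} psi' r"
proof -
  let ?B = "{0..<N} - A"
  let ?A' = "{j\<in>{0..<n}. sg j \<in> A}"
  let ?B' = "{0..<n} - ?A'"
  obtain a b where ab: "\<And>x y. x\<in>cfg A \<Longrightarrow> y\<in>cfg ?B \<Longrightarrow>
      embed N n sg psi' (merge A x y) = (\<Sum>k<r. a k x * b k y)"
    using d unfolding has_dec_def by blast
  define iv where "iv = the_inv_into {0..<n} sg"
  have iv: "iv (sg j) = j" if "j < n" for j
    unfolding iv_def using the_inv_into_f_f[OF sg(1)] that by simp
  define X where "X x' = restrict (\<lambda>i. if i \<in> sg ` ?A' then x' (iv i) else False) A" for x'
  define Y where "Y y' = restrict (\<lambda>i. if i \<in> sg ` ?B' then y' (iv i) else False) ?B" for y'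
  show ?thesis unfolding has_dec_def
  proof (intro exI ballI)
    fix x' y' assume x': "x' \<in> cfg ?A'" and y': "y' \<in> cfg ?B'"
    have Xc: "X x' \<in> cfg A" and Yc: "Y y' \<in> cfg ?B" by (auto simp: X_def Y_def cfg_def)
    have cond: "\<forall>i\<in>{0..<N} - sg ` {0..<n}. merge A (X x') (Y y') i = False"
      by (auto simp: merge_def X_def Y_def)
    have rs: "restrict (\<lambda>j. merge A (X x') (Y y') (sg j)) {0..<n} = merge ?A' x' y'"
    proof
      fix j
      show "restrict (\<lambda>j. merge A (X x') (Y y') (sg j)) {0..<n} j = merge ?A' x' y' j"
      proof (cases "j < n")
        case True
        have sgj: "sg j < N" using sg(2) True by (auto simp: image_subset_iff)
        have inA: "sg j \<in> sg ` ?A' \<longleftrightarrow> sg j \<in> A" using True sg(1)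
          by (auto simp: inj_on_def)
        have inB: "sg j \<in> sg ` ?B' \<longleftrightarrow> sg j \<notin> A" using True sg(1)
          by (auto simp: inj_on_def)
        show ?thesis using True sgj inA inB iv[OF True]
          by (auto simp: merge_def X_def Y_def)
      next
        case False
        then show ?thesis using y' by (auto simp: merge_def cfg_iff)
      qed
    qed
    have "psi' (merge ?A' x' y') = embed N n sg psi' (merge A (X x') (Y y'))"
      unfolding embed_def using cond rs by simp
    also have "\<dots> = (\<Sum>k<r. a k (X x') * b k (Y y'))" using ab[OF Xc Yc] .
    finally show "psi' (merge ?A' x' y') = (\<Sum>k<r. (\<lambda>k x'. a k (X x')) k x' * (\<lambda>k y'. b k (Y y')) k y')"
      by simp
  qed
qed

lemma adj_iff: "(x, y) \<in> adj E \<longleftrightarrow> {x, y} \<in> E"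
  by (simp add: adj_def)

lemma adj_sym: "(x, y) \<in> adj E \<Longrightarrow> (y, x) \<in> adj E"
  by (simp add: adj_def insert_commute)

lemma rt_sym: "(x, y) \<in> (adj E)\<^sup>* \<Longrightarrow> (y, x) \<in> (adj E)\<^sup>*"
proof (induction rule: rtrancl_induct)
  case base then show ?case by simp
next
  case (step y z)
  then show ?case using adj_sym[OF step(2)] by (meson converse_rtrancl_into_rtrancl)
qed

lemma rt_map:
  assumes "\<And>x y. (x, y) \<in> r \<Longrightarrow> (h x, h y) \<in> s\<^sup>*" "(x, y) \<in> r\<^sup>*"
  shows "(h x, h y) \<in> s\<^sup>*"
  using assms(2)
proof (induction rule: rtrancl_induct)
  case base then show ?case by simp
next
  case (step y z)
  then show ?case using assms(1)[OF step(2)] by (meson rtrancl_trans)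
qed

lemma adj_insert: "adj (insert e E) = adj E \<union> {(x, y). {x, y} = e}"
  by (auto simp: adj_def)

lemma rt_stays:
  assumes "(a, z) \<in> (adj E)\<^sup>*" "\<forall>f\<in>E. f \<subseteq> V" "a \<in> V"
  shows "z \<in> V"
  using assms(1)
proof (induction rule: rtrancl_induct)
  case base then show ?case using assms(3) .
next
  case (step y z)
  then show ?case using assms(2) by (auto simp: adj_def)
qed

definition Rch :: "nat set set \<Rightarrow> nat \<Rightarrow> nat set" where
  "Rch E a = {z. (a, z) \<in> (adj E)\<^sup>*}"

definition EI :: "nat set set \<Rightarrow> nat set \<Rightarrow> nat set set" where
  "EI E X = {f \<in> E. f \<subseteq> X}"

lemma card2_obtain:
  assumes "card f = 2" "x \<in> f"
  obtains y where "y \<noteq> x" "f = {x, y}"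
proof -
  obtain a b where ab: "f = {a, b}" "a \<noteq> b" using assms(1) by (meson card_2_iff)
  show ?thesis
  proof (cases "x = a")
    case True then show ?thesis using that[of b] ab by simp
  next
    case False then have "x = b" using assms(2) ab by blast
    then show ?thesis using that[of a] ab by (simp add: insert_commute)
  qed
qed

lemma Rch_finite:
  assumes "finite E" "\<forall>f\<in>E. card f = 2"
  shows "finite (Rch E a)"
proof -
  have "Rch E a \<subseteq> insert a (\<Union>E)"
  proof
    fix z assume "z \<in> Rch E a"
    then have "(a, z) \<in> (adj E)\<^sup>*" by (simp add: Rch_def)
    then show "z \<in> insert a (\<Union>E)"
      by (induction rule: rtrancl_induct) (auto simp: adj_def)
  qed
  moreover have "finite (\<Union>E)" using assms by (intro finite_Union) (auto intro: card_ge_0_finite)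
  ultimately show ?thesis using finite_subset by blast
qed

lemma CONN0:
  assumes "finite E" "\<forall>f\<in>E. card f = 2"
  shows "card (Rch E a) \<le> card (EI E (Rch E a)) + 1"
  using assms
proof (induction E arbitrary: a rule: finite_induct)
  case empty
  have "Rch {} a = {a}" by (auto simp: Rch_def adj_def elim: rtranclE)
  then show ?case by simp
next
  case (insert e E)
  have c2: "\<forall>f\<in>E. card f = 2" using insert by simp
  note IH = insert.IH[OF c2]
  have finR: "finite (Rch E b)" for b using Rch_finite[OF insert(1) c2] .
  have finE': "finite (insert e E)" using insert(1) by simp
  have ce: "card e = 2" using insert(4) by simp
  obtain c0 d0 where cd0: "e = {c0, d0}" "c0 \<noteq> d0" using ce by (meson card_2_iff)
  let ?Ra = "Rch E a"
  obtain c d where cd: "e = {c, d}" "c \<noteq> d" and cs: "(c \<in> ?Ra \<longleftrightarrow> d \<in> ?Ra) \<or> (c \<in> ?Ra \<and> d \<notin> ?Ra)"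
  proof (cases "c0 \<in> ?Ra \<longleftrightarrow> d0 \<in> ?Ra")
    case True then show ?thesis using that[of c0 d0] cd0 by simp
  next
    case False
    show ?thesis
    proof (cases "c0 \<in> ?Ra")
      case True then show ?thesis using that[of c0 d0] cd0 False by simp
    next
      case c0: False
      have "{c0, d0} = {d0, c0}" by (rule insert_commute)
      then show ?thesis using that[of d0 c0] cd0 False c0 by simp
    qed
  qed
  have adjI: "adj (insert e E) = adj E \<union> {(c, d), (d, c)}"
    using cd by (auto simp: adj_def doubleton_eq_iff)
  have monoR: "Rch E b \<subseteq> Rch (insert e E) b" for b
    unfolding Rch_def using rtrancl_mono[of "adj E" "adj (insert e E)"] by (auto simp: adjI)
  have monoEI: "EI E X \<subseteq> EI (insert e E) Y" if "X \<subseteq> Y" for X Y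
    using that by (auto simp: EI_def)
  have finEI: "finite (EI (insert e E) X)" for X using finE' by (simp add: EI_def)
  show ?case
  proof (cases "c \<in> ?Ra \<longleftrightarrow> d \<in> ?Ra")
    case True
    have "Rch (insert e E) a \<subseteq> ?Ra"
    proof
      fix z assume "z \<in> Rch (insert e E) a"
      then have "(a, z) \<in> (adj (insert e E))\<^sup>*" by (simp add: Rch_def)
      then show "z \<in> ?Ra"
      proof (induction rule: rtrancl_induct)
        case base then show ?case by (simp add: Rch_def)
      next
        case (step y z)
        show ?case
        proof (cases "(y, z) \<in> adj E")
          case True
          then show ?thesis using step(3) by (auto simp: Rch_def intro: rtrancl_into_rtrancl)
        next
          case False
          then have "(y = c \<and> z = d) \<or> (y = d \<and> z = c)" using step(2) adjI by auto
          then show ?thesis using step(3) \<open>c \<in> ?Ra \<longleftrightarrow> d \<in> ?Ra\<close> by auto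
        qed
      qed
    qed
    then have eq: "Rch (insert e E) a = ?Ra" using monoR by blast
    have "card ?Ra \<le> card (EI E ?Ra) + 1" using IH .
    also have "card (EI E ?Ra) \<le> card (EI (insert e E) ?Ra)"
      by (rule card_mono[OF finEI monoEI]) simp
    finally show ?thesis using eq by simp
  next
    case False
    then have cin: "c \<in> ?Ra" and dout: "d \<notin> ?Ra" using cs by auto
    let ?Rd = "Rch E d"
    have ac: "(a, c) \<in> (adj (insert e E))\<^sup>*" using monoR cin by (auto simp: Rch_def)
    have eq: "Rch (insert e E) a = ?Ra \<union> ?Rd"
    proof
      show "Rch (insert e E) a \<subseteq> ?Ra \<union> ?Rd"
      proof
        fix z assume "z \<in> Rch (insert e E) a"
        then have "(a, z) \<in> (adj (insert e E))\<^sup>*" by (simp add: Rch_def)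
        then show "z \<in> ?Ra \<union> ?Rd"
        proof (induction rule: rtrancl_induct)
          case base then show ?case by (simp add: Rch_def)
        next
          case (step y z)
          show ?case
          proof (cases "(y, z) \<in> adj E")
            case True
            then show ?thesis using step(3) by (auto simp: Rch_def intro: rtrancl_into_rtrancl)
          next
            case False
            then have "(y = c \<and> z = d) \<or> (y = d \<and> z = c)" using step(2) adjI by auto
            then show ?thesis using cin by (auto simp: Rch_def)
          qed
        qed
      qed
    next
      show "?Ra \<union> ?Rd \<subseteq> Rch (insert e E) a"
      proof
        fix z assume z: "z \<in> ?Ra \<union> ?Rd"
        show "z \<in> Rch (insert e E) a"
        proof (cases "z \<in> ?Ra")
          case True then show ?thesis using monoR by blast
        next
          case False
          then have "(d, z) \<in> (adj (insert e E))\<^sup>*" using z monoR by (auto simp: Rch_def)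
          moreover have "(c, d) \<in> adj (insert e E)" using adjI by auto
          ultimately have "(a, z) \<in> (adj (insert e E))\<^sup>*"
            using rtrancl_trans[OF rtrancl_into_rtrancl[OF ac]] by blast
          then show ?thesis unfolding Rch_def by simp
        qed
      qed
    qed
    have disj: "?Ra \<inter> ?Rd = {}"
    proof (rule ccontr)
      assume "?Ra \<inter> ?Rd \<noteq> {}"
      then obtain z where "(a, z) \<in> (adj E)\<^sup>*" "(d, z) \<in> (adj E)\<^sup>*" by (auto simp: Rch_def)
      then have "(a, d) \<in> (adj E)\<^sup>*" using rt_sym by (meson rtrancl_trans)
      then show False using dout by (simp add: Rch_def)
    qed
    have eNot: "e \<notin> EI E ?Ra \<union> EI E ?Rd" using insert(2) by (auto simp: EI_def)
    have disjEI: "EI E ?Ra \<inter> EI E ?Rd = {}"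
    proof (rule ccontr)
      assume "EI E ?Ra \<inter> EI E ?Rd \<noteq> {}"
      then obtain f where f: "f \<in> E" "f \<subseteq> ?Ra" "f \<subseteq> ?Rd" by (auto simp: EI_def)
      then have "f \<noteq> {}" using c2 by fastforce
      then show False using f disj by blast
    qed
    have sub: "insert e (EI E ?Ra \<union> EI E ?Rd) \<subseteq> EI (insert e E) (?Ra \<union> ?Rd)"
      using cin by (auto simp: EI_def cd Rch_def)
    have finEI2: "finite (EI E X)" for X using insert(1) by (simp add: EI_def)
    have "card (?Ra \<union> ?Rd) = card ?Ra + card ?Rd"
      by (rule card_Un_disjoint[OF finR finR disj])
    also have "\<dots> \<le> (card (EI E ?Ra) + 1) + (card (EI E ?Rd) + 1)"
      using IH[of a] IH[of d] by simp
    also have "\<dots> = card (insert e (EI E ?Ra \<union> EI E ?Rd)) + 1"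
      using eNot disjEI finEI2 by (simp add: card_Un_disjoint)
    also have "\<dots> \<le> card (EI (insert e E) (?Ra \<union> ?Rd)) + 1"
      using card_mono[OF finEI sub] by simp
    finally show ?thesis using eq by simp
  qed
qed

lemma conn_bound:
  assumes V: "finite V" and E: "\<forall>f\<in>E. f \<subseteq> V \<and> card f = 2" and a: "a \<in> V"
    and conn: "\<forall>z\<in>V. (a, z) \<in> (adj E)\<^sup>*"
  shows "card V \<le> card E + 1"
proof -
  have sub: "E \<subseteq> Pow V" using E by auto
  have finE: "finite E" using finite_subset[OF sub] V by simp
  have "Rch E a = V" using conn rt_stays[of a _ E V] E a by (auto simp: Rch_def)
  moreover have "EI E V = E" using E by (auto simp: EI_def)
  ultimately show ?thesis using CONN0[OF finE, of a] E by simp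
qed

lemma tree_finE: assumes "is_tree V E" shows "finite E"
proof -
  have sub: "E \<subseteq> Pow V" using assms by (auto simp: is_tree_def)
  have "finite V" using assms by (simp add: is_tree_def)
  then show ?thesis using finite_subset[OF sub] by simp
qed

lemma treeD:
  assumes "is_tree V E"
  shows "finite V" "V \<noteq> {}" "\<And>f. f \<in> E \<Longrightarrow> f \<subseteq> V" "\<And>f. f \<in> E \<Longrightarrow> card f = 2"
    "\<And>u v. u \<in> V \<Longrightarrow> v \<in> V \<Longrightarrow> (u, v) \<in> (adj E)\<^sup>*" "card E + 1 = card V"
  using assms unfolding is_tree_def by simp_all

lemma TSPLIT:
  assumes T: "is_tree V E" and e: "{a, b} \<in> E" and ab: "a \<noteq> b"
  shows "\<forall>z\<in>V. (a, z) \<in> (adj (E - {{a, b}}))\<^sup>* \<or> (b, z) \<in> (adj (E - {{a, b}}))\<^sup>*"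
    and "(a, b) \<notin> (adj (E - {{a, b}}))\<^sup>*"
proof -
  let ?R = "adj (E - {{a, b}})"
  have aV: "a \<in> V" using treeD(3)[OF T e] by simp
  have split: "adj E = ?R \<union> {(a, b), (b, a)}"
  proof (intro set_eqI iffI)
    fix p assume "p \<in> adj E"
    then show "p \<in> ?R \<union> {(a, b), (b, a)}" by (cases p) (auto simp: adj_def doubleton_eq_iff)
  next
    fix p assume p: "p \<in> ?R \<union> {(a, b), (b, a)}"
    have "{b, a} \<in> E" using e by (simp add: insert_commute)
    then show "p \<in> adj E" using p e by (cases p) (auto simp: adj_def)
  qed
  show i: "\<forall>z\<in>V. (a, z) \<in> ?R\<^sup>* \<or> (b, z) \<in> ?R\<^sup>*"
  proof
    fix z assume "z \<in> V"
    then have "(a, z) \<in> (adj E)\<^sup>*" using treeD(5)[OF T aV] by simp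
    then show "(a, z) \<in> ?R\<^sup>* \<or> (b, z) \<in> ?R\<^sup>*"
    proof (induction rule: rtrancl_induct)
      case base then show ?case by simp
    next
      case (step y z)
      show ?case
      proof (cases "(y, z) \<in> ?R")
        case True
        then show ?thesis using step(3) by (meson rtrancl_into_rtrancl)
      next
        case False
        then have "(y = a \<and> z = b) \<or> (y = b \<and> z = a)" using step(2) split by auto
        then show ?thesis by auto
      qed
    qed
  qed
  show "(a, b) \<notin> ?R\<^sup>*"
  proof
    assume abR: "(a, b) \<in> ?R\<^sup>*"
    have conn: "\<forall>z\<in>V. (a, z) \<in> ?R\<^sup>*"
    proof
      fix z assume "z \<in> V"
      then have "(a, z) \<in> ?R\<^sup>* \<or> (b, z) \<in> ?R\<^sup>*" using i by blast
      then show "(a, z) \<in> ?R\<^sup>*" using abR rtrancl_trans by metis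
    qed
    have E': "\<forall>f\<in>E - {{a, b}}. f \<subseteq> V \<and> card f = 2" using treeD(3,4)[OF T] by simp
    have "card V \<le> card (E - {{a, b}}) + 1"
      by (rule conn_bound[OF treeD(1)[OF T] E' aV conn])
    also have "\<dots> = card E" using card_Suc_Diff1[OF tree_finE[OF T] e] by simp
    finally show False using treeD(6)[OF T] by simp
  qed
qed

definition gtree :: "nat set \<Rightarrow> ltree \<Rightarrow> bool" where
  "gtree Q T = (case T of (Vt, E, lf) \<Rightarrow> is_tree Vt E \<and> (\<forall>v\<in>Vt. degree E v \<in> {1, 3}) \<and>
     bij_betw lf Q {v \<in> Vt. degree E v = 1})"

definition gcut :: "nat set \<Rightarrow> ltree \<Rightarrow> nat set \<Rightarrow> nat set" where
  "gcut Q T e = (case T of (Vt, E, lf) \<Rightarrow> {i \<in> Q. (Min e, lf i) \<in> (adj (E - {e}))\<^sup>*})"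

lemma subcubic_gtree: "subcubic_tree n T = gtree {0..<n} T"
  by (simp add: subcubic_tree_def gtree_def)

lemma cut_gcut: "cut_side n T e = gcut {0..<n} T e"
  by (simp add: cut_side_def gcut_def)

lemma rt_map_adj:
  assumes "\<And>s t. {s, t} \<in> F \<Longrightarrow> (h s, h t) \<in> (adj G)\<^sup>*" "(x, y) \<in> (adj F)\<^sup>*"
  shows "(h x, h y) \<in> (adj G)\<^sup>*"
  by (rule rt_map[OF _ assms(2)]) (use assms(1) in \<open>auto simp: adj_def\<close>)

lemma adj_rt2: "{a, b} \<in> E \<Longrightarrow> {b, c} \<in> E \<Longrightarrow> (a, c) \<in> (adj E)\<^sup>*"
  by (meson adj_iff r_into_rtrancl rtrancl_into_rtrancl)

lemma remove_leaf:
  assumes G: "gtree Q (V, E, lf)" and q: "q \<in> Q" and finQ: "finite Q" and c3: "3 \<le> card Q"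
  shows "\<exists>V' E'. gtree (Q - {q}) (V', E', lf) \<and>
     (\<forall>e'\<in>E'. \<exists>e\<in>E. gcut (Q - {q}) (V', E', lf) e' = gcut Q (V, E, lf) e \<inter> (Q - {q}) \<or>
                     gcut (Q - {q}) (V', E', lf) e' = (Q - {q}) - gcut Q (V, E, lf) e)"
proof -
  have T: "is_tree V E" and degs: "\<forall>v\<in>V. degree E v \<in> {1,3}"
    and bij: "bij_betw lf Q {v\<in>V. degree E v = 1}"
    using G by (simp_all add: gtree_def)
  define L where "L = {v\<in>V. degree E v = 1}"
  have bijL: "bij_betw lf Q L" using bij by (simp add: L_def)
  have finE: "finite E" by (rule tree_finE[OF T])
  define l where "l = lf q"
  have lL: "l \<in> L" using bij_betw_apply[OF bijL q] by (simp add: l_def)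
  have lV: "l \<in> V" and dl: "degree E l = 1" using lL by (auto simp: L_def)
  obtain f0 where f0s: "{f\<in>E. l \<in> f} = {f0}" using dl unfolding degree_def by (rule card_1_singletonE)
  have f0E: "f0 \<in> E" "l \<in> f0" using f0s by auto
  have onlyl: "f = f0" if "f \<in> E" "l \<in> f" for f using f0s that by auto
  obtain p where p: "p \<noteq> l" "f0 = {l, p}"
    using card2_obtain[OF treeD(4)[OF T f0E(1)] f0E(2)] by metis
  have pV: "p \<in> V" using treeD(3)[OF T f0E(1)] p by auto
  have cardL: "card L = card Q" using bij_betw_same_card[OF bijL] by simp
  have dp3: "degree E p = 3"
  proof -
    have "degree E p \<in> {1,3}" using degs pV by blast
    moreover have "degree E p \<noteq> 1"
    proof
      assume dp: "degree E p = 1"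
      obtain g where g: "{f\<in>E. p\<in>f} = {g}" using dp unfolding degree_def by (rule card_1_singletonE)
      have "f0 \<in> {f\<in>E. p\<in>f}" using f0E p by auto
      then have g0: "g = f0" using g by auto
      have onlyp: "f = f0" if "f \<in> E" "p \<in> f" for f using g g0 that by auto
      have "V \<subseteq> {l, p}"
      proof
        fix z assume "z \<in> V"
        then have "(l, z) \<in> (adj E)\<^sup>*" using treeD(5)[OF T lV] by simp
        then show "z \<in> {l, p}"
        proof (induction rule: rtrancl_induct)
          case base then show ?case by simp
        next
          case (step y z)
          have yz: "{y, z} \<in> E" using step(2) by (simp add: adj_def)
          have "{y, z} = f0" using step(3) onlyl[OF yz] onlyp[OF yz] by auto
          then show ?case using p by auto
        qed
      qed
      then have "L \<subseteq> {l, p}" by (auto simp: L_def)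
      then have "card L \<le> card {l, p}" by (rule card_mono[rotated]) simp
      also have "\<dots> \<le> 2" by (simp add: card_insert_if)
      finally show False using cardL c3 by simp
    qed
    ultimately show ?thesis by simp
  qed
  define P3 where "P3 = {f\<in>E. p \<in> f}"
  have cP3: "card P3 = 3" using dp3 by (simp add: degree_def P3_def)
  have f0P: "f0 \<in> P3" using f0E p by (auto simp: P3_def)
  have finP3: "finite P3" using finE by (simp add: P3_def)
  have "card (P3 - {f0}) = 2" using cP3 f0P finP3 by (simp add: card_Diff_singleton)
  then obtain f1 f2 where f12: "P3 - {f0} = {f1, f2}" "f1 \<noteq> f2" by (meson card_2_iff)
  have f1P: "f1 \<in> E" "p \<in> f1" "f1 \<noteq> f0" using f12(1) unfolding P3_def by auto
  have f2P: "f2 \<in> E" "p \<in> f2" "f2 \<noteq> f0" using f12(1) unfolding P3_def by auto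
  have onlyp: "f = f0 \<or> f = f1 \<or> f = f2" if "f \<in> E" "p \<in> f" for f
  proof -
    have "f \<in> P3" using that by (simp add: P3_def)
    then show ?thesis using f12(1) by auto
  qed
  obtain u where u: "u \<noteq> p" "f1 = {p, u}"
    using card2_obtain[OF treeD(4)[OF T f1P(1)] f1P(2)] by metis
  obtain w where w: "w \<noteq> p" "f2 = {p, w}"
    using card2_obtain[OF treeD(4)[OF T f2P(1)] f2P(2)] by metis
  have ul: "u \<noteq> l" using u p f1P(3) by (auto simp: insert_commute)
  have wl: "w \<noteq> l" using w p f2P(3) by (auto simp: insert_commute)
  have uw: "u \<noteq> w" using u w f12(2) by auto
  have uV: "u \<in> V" using treeD(3)[OF T f1P(1)] u by auto
  have wV: "w \<in> V" using treeD(3)[OF T f2P(1)] w by auto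
  have f1E: "{p, u} \<in> E" using f1P u by simp
  have f2E: "{p, w} \<in> E" using f2P w by simp
  have uwE: "{u, w} \<notin> E"
  proof
    assume uwE: "{u, w} \<in> E"
    have n: "(p, u) \<notin> (adj (E - {{p, u}}))\<^sup>*" using TSPLIT(2)[OF T f1E u(1)[symmetric]] .
    have a1: "{p, w} \<in> E - {{p, u}}" using f2E uw by (auto simp: doubleton_eq_iff)
    have a2: "{w, u} \<in> E - {{p, u}}" using uwE u w by (auto simp: doubleton_eq_iff insert_commute)
    show False using adj_rt2[OF a1 a2] n by simp
  qed
  define E' where "E' = insert {u, w} (E - {f0, f1, f2})"
  define V' where "V' = V - {l, p}"
  have noLP: "l \<notin> f \<and> p \<notin> f" if "f \<in> E" "f \<notin> {f0, f1, f2}" for f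
    using onlyl[OF that(1)] onlyp[OF that(1)] that(2) by auto
  have uV': "u \<in> V'" and wV': "w \<in> V'" using uV wV ul wl u w by (auto simp: V'_def)
  have finV': "finite V'" using treeD(1)[OF T] by (simp add: V'_def)
  have E'sub: "f \<subseteq> V' \<and> card f = 2" if "f \<in> E'" for f
  proof (cases "f = {u, w}")
    case True then show ?thesis using uV' wV' uw by simp
  next
    case False
    then have fE: "f \<in> E" "f \<notin> {f0, f1, f2}" using that by (auto simp: E'_def)
    then show ?thesis using noLP[OF fE] treeD(3,4)[OF T fE(1)] by (auto simp: V'_def)
  qed
  have d01: "f0 \<noteq> f1" "f0 \<noteq> f2" using f1P f2P by auto
  have c3E: "card {f0, f1, f2} = 3" using d01 f12(2) by simp
  have subE: "{f0, f1, f2} \<subseteq> E" using f0E f1P f2P by simp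
  have cE': "card E' = card E - 3 + 1"
  proof -
    have "card (E - {f0, f1, f2}) = card E - 3"
      using card_Diff_subset[OF _ subE] c3E by simp
    moreover have "{u, w} \<notin> E - {f0, f1, f2}" using uwE by simp
    ultimately show ?thesis using finE by (simp add: E'_def)
  qed
  have cE3: "3 \<le> card E" using card_mono[OF finE subE] c3E by simp
  have cV': "card V' = card V - 2"
  proof -
    have "{l, p} \<subseteq> V" using lV pV by simp
    moreover have "card {l, p} = 2" using p by simp
    ultimately show ?thesis using card_Diff_subset[of "{l, p}" V] by (simp add: V'_def)
  qed
  have cards: "card E' + 1 = card V'" using cE' cV' cE3 treeD(6)[OF T] by simp
  define h where "h z = (if z = l \<or> z = p then u else z)" for z
  have hid: "h z = z" if "z \<in> V'" for z using that by (simp add: h_def V'_def)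
  have hstep: "(h s, h t) \<in> (adj (E' - X))\<^sup>*" if st: "{s, t} \<in> E" and X: "{u, w} \<notin> X"
    and X2: "\<And>f. f \<in> E \<Longrightarrow> f \<notin> {f0, f1, f2} \<Longrightarrow> f \<notin> X \<Longrightarrow> f \<in> E' - X"
    and st2: "{s, t} \<notin> X" for s t X
  proof -
    consider "{s, t} = f0" | "{s, t} = f1" | "{s, t} = f2" | "{s, t} \<notin> {f0, f1, f2}" by blast
    then show ?thesis
    proof cases
      case 1
      then have "s \<in> {l, p}" "t \<in> {l, p}" using p by (auto simp: doubleton_eq_iff)
      then show ?thesis by (auto simp: h_def)
    next
      case 2
      then have "s \<in> {p, u}" "t \<in> {p, u}" using u by (auto simp: doubleton_eq_iff)
      then show ?thesis using ul u by (auto simp: h_def)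
    next
      case 3
      then have "(s = p \<and> t = w) \<or> (s = w \<and> t = p)" using w by (auto simp: doubleton_eq_iff)
      moreover have "{u, w} \<in> E' - X" "{w, u} \<in> E' - X" using X by (auto simp: E'_def insert_commute)
      ultimately show ?thesis using wl w by (auto simp: h_def adj_def)
    next
      case 4
      have "h s = s" "h t = t" using noLP[OF st 4] by (auto simp: h_def)
      moreover have "{s, t} \<in> E' - X" using X2[OF st 4 st2] .
      ultimately show ?thesis by (auto simp: adj_def)
    qed
  qed
  have conn': "(x, y) \<in> (adj E')\<^sup>*" if "x \<in> V'" "y \<in> V'" for x y
  proof -
    have "(x, y) \<in> (adj E)\<^sup>*" using treeD(5)[OF T] that by (auto simp: V'_def)
    then have "(h x, h y) \<in> (adj (E' - {}))\<^sup>*"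
      by (rule rt_map_adj[rotated]) (rule hstep, auto simp: E'_def)
    then show ?thesis using hid that by simp
  qed
  have tree': "is_tree V' E'"
    unfolding is_tree_def
  proof (intro conjI)
    show "V' \<noteq> {}" using uV' by blast
    show "\<forall>f\<in>E'. f \<subseteq> V' \<and> card f = 2" using E'sub by blast
    show "\<forall>x\<in>V'. \<forall>y\<in>V'. (x, y) \<in> (adj E')\<^sup>*" using conn' by blast
  qed (use finV' cards in auto)
  have finEv: "finite {f\<in>E. v \<in> f}" for v using finE by simp
  have uf0: "u \<notin> f0" "u \<notin> f2" "w \<notin> f0" "w \<notin> f1" using p u w ul wl uw by auto
  have deg_in: "degree E' v = degree E v" if "v \<in> fv" "fv \<in> E" "v \<notin> f0" "{f\<in>E'. v\<in>f} = insert {u, w} ({f\<in>E. v\<in>f} - {fv})" for v fv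
  proof -
    have "{u, w} \<notin> {f\<in>E. v\<in>f} - {fv}" using uwE by simp
    then have "card {f\<in>E'. v\<in>f} = Suc (card ({f\<in>E. v\<in>f} - {fv}))"
      using that(4) finEv[of v] by simp
    also have "\<dots> = card {f\<in>E. v\<in>f}" using card_Suc_Diff1[OF finEv[of v], of fv] that(1,2) by simp
    finally show ?thesis by (simp add: degree_def)
  qed
  have deg': "degree E' v = degree E v" if v: "v \<in> V'" for v
  proof -
    have vl: "v \<noteq> l" "v \<noteq> p" using v by (auto simp: V'_def)
    consider "v = u" | "v = w" | "v \<noteq> u" "v \<noteq> w" by blast
    then show ?thesis
    proof cases
      case 1
      have "{f\<in>E'. u\<in>f} = insert {u, w} ({f\<in>E. u\<in>f} - {f1})"
        unfolding E'_def using uf0 by auto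
      then show ?thesis using deg_in[of u f1] 1 u f1P uf0 by simp
    next
      case 2
      have "{f\<in>E'. w\<in>f} = insert {u, w} ({f\<in>E. w\<in>f} - {f2})"
        unfolding E'_def using uf0 by auto
      then show ?thesis using deg_in[of w f2] 2 w f2P uf0 by simp
    next
      case 3
      have "v \<notin> f0" "v \<notin> f1" "v \<notin> f2" using vl 3 p u w by auto
      then have "{f\<in>E'. v\<in>f} = {f\<in>E. v\<in>f}"
        unfolding E'_def using 3 by auto
      then show ?thesis by (simp add: degree_def)
    qed
  qed
  have leaves': "{v\<in>V'. degree E' v = 1} = L - {l}"
  proof (intro set_eqI iffI)
    fix v assume "v \<in> {v\<in>V'. degree E' v = 1}"
    then show "v \<in> L - {l}" using deg' by (auto simp: L_def V'_def)
  next
    fix v assume v: "v \<in> L - {l}"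
    then have "v \<noteq> p" using dp3 by (auto simp: L_def)
    then have "v \<in> V'" using v by (auto simp: L_def V'_def)
    then show "v \<in> {v\<in>V'. degree E' v = 1}" using deg' v by (auto simp: L_def)
  qed
  have bij': "bij_betw lf (Q - {q}) (L - {l})"
    by (rule bij_betw_DiffI[OF bijL]) (use q lL in \<open>auto simp: bij_betw_def l_def\<close>)
  have G': "gtree (Q - {q}) (V', E', lf)"
    unfolding gtree_def using tree' deg' degs bij' leaves' by (auto simp: V'_def)
  have lfV': "lf i \<in> V'" if i: "i \<in> Q - {q}" for i
  proof -
    have "lf i \<in> L - {l}" using bij' i by (rule bij_betw_apply)
    moreover have "p \<notin> L" using dp3 by (simp add: L_def)
    ultimately show ?thesis by (auto simp: L_def V'_def)
  qed
  have cuts: "\<exists>e\<in>E. gcut (Q - {q}) (V', E', lf) e' = gcut Q (V, E, lf) e \<inter> (Q - {q}) \<or>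
                     gcut (Q - {q}) (V', E', lf) e' = (Q - {q}) - gcut Q (V, E, lf) e"
    if e': "e' \<in> E'" for e'
  proof (cases "e' = {u, w}")
    case False
    then have e'E: "e' \<in> E" "e' \<notin> {f0, f1, f2}" using e' by (auto simp: E'_def)
    have fwd: "(x, y) \<in> (adj (E - {e'}))\<^sup>*" if "(x, y) \<in> (adj (E' - {e'}))\<^sup>*" for x y
    proof -
      have "(id x, id y) \<in> (adj (E - {e'}))\<^sup>*"
      proof (rule rt_map_adj[OF _ that])
        fix s t assume st: "{s, t} \<in> E' - {e'}"
        show "(id s, id t) \<in> (adj (E - {e'}))\<^sup>*"
        proof (cases "{s, t} = {u, w}")
          case True
          then have "(s = u \<and> t = w) \<or> (s = w \<and> t = u)" by (auto simp: doubleton_eq_iff)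
          moreover have ne: "{p, u} \<noteq> e'" "{p, w} \<noteq> e'" using e'E u w by auto
          moreover have a1: "{u, p} \<in> E - {e'}" "{p, u} \<in> E - {e'}" using f1E ne by (simp_all add: insert_commute)
          moreover have a2: "{w, p} \<in> E - {e'}" "{p, w} \<in> E - {e'}" using f2E ne by (simp_all add: insert_commute)
          ultimately show ?thesis using adj_rt2[OF a1(1) a2(2)] adj_rt2[OF a2(1) a1(2)] by auto
        next
          case False
          then have "{s, t} \<in> E - {e'}" using st by (auto simp: E'_def)
          then show ?thesis by (auto simp: adj_def)
        qed
      qed
      then show ?thesis by simp
    qed
    have bwd: "(x, y) \<in> (adj (E' - {e'}))\<^sup>*" if "(x, y) \<in> (adj (E - {e'}))\<^sup>*" "x \<in> V'" "y \<in> V'" for x y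
    proof -
      have "(h x, h y) \<in> (adj (E' - {e'}))\<^sup>*"
      proof (rule rt_map_adj[OF _ that(1)])
        fix s t assume st: "{s, t} \<in> E - {e'}"
        show "(h s, h t) \<in> (adj (E' - {e'}))\<^sup>*"
          by (rule hstep) (use st False in \<open>auto simp: E'_def\<close>)
      qed
      then show ?thesis using hid that(2,3) by simp
    qed
    have mV': "Min e' \<in> V'"
    proof -
      have "card e' = 2" "e' \<subseteq> V'" using E'sub[OF e'] by auto
      then have "finite e'" "e' \<noteq> {}" by (auto intro: card_ge_0_finite)
      then show ?thesis using \<open>e' \<subseteq> V'\<close> Min_in by blast
    qed
    have "gcut (Q - {q}) (V', E', lf) e' = gcut Q (V, E, lf) e' \<inter> (Q - {q})"
      unfolding gcut_def using fwd bwd mV' lfV' by auto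
    then show ?thesis using e'E by blast
  next
    case True
    let ?R1 = "adj (E - {{p, u}})"
    let ?R' = "adj (E' - {{u, w}})"
    have fwd: "(x, y) \<in> ?R1\<^sup>*" if "(x, y) \<in> ?R'\<^sup>*" for x y
    proof -
      have "E' - {{u, w}} \<subseteq> E - {{p, u}}" using u by (auto simp: E'_def)
      then have "?R' \<subseteq> ?R1" by (auto simp: adj_def)
      then show ?thesis using that rtrancl_mono by blast
    qed
    define h2 where "h2 z = (if z = l \<or> z = p then w else z)" for z
    have bwd: "(h2 x, h2 y) \<in> ?R'\<^sup>*" if "(x, y) \<in> ?R1\<^sup>*" for x y
    proof (rule rt_map_adj[OF _ that])
      fix s t assume st: "{s, t} \<in> E - {{p, u}}"
      consider "{s, t} = f0" | "{s, t} = f2" | "{s, t} \<notin> {f0, f1, f2}" using st u by auto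
      then show "(h2 s, h2 t) \<in> ?R'\<^sup>*"
      proof cases
        case 1
        then have "s \<in> {l, p}" "t \<in> {l, p}" using p by (auto simp: doubleton_eq_iff)
        then show ?thesis by (auto simp: h2_def)
      next
        case 2
        then have "s \<in> {p, w}" "t \<in> {p, w}" using w by (auto simp: doubleton_eq_iff)
        then show ?thesis using wl w by (auto simp: h2_def)
      next
        case 3
        have "h2 s = s" "h2 t = t" using noLP[OF _ 3] st by (auto simp: h2_def)
        moreover have "{s, t} \<in> E' - {{u, w}}" using 3 st uwE by (auto simp: E'_def)
        ultimately show ?thesis by (auto simp: adj_def)
      qed
    qed
    have h2id: "h2 z = z" if "z \<in> V'" for z using that by (simp add: h2_def V'_def)
    have spl1: "\<forall>z\<in>V. (p, z) \<in> ?R1\<^sup>* \<or> (u, z) \<in> ?R1\<^sup>*" using TSPLIT(1)[OF T f1E u(1)[symmetric]] .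
    have spl2: "(p, u) \<notin> ?R1\<^sup>*" using TSPLIT(2)[OF T f1E u(1)[symmetric]] .
    have pw: "(p, w) \<in> ?R1" using f2E uw by (auto simp: adj_def doubleton_eq_iff)
    have Au: "(u, z) \<in> ?R'\<^sup>* \<longleftrightarrow> (u, z) \<in> ?R1\<^sup>*" if "z \<in> V'" for z
      using fwd bwd[of u z] h2id[OF uV'] h2id[OF that] by auto
    have Bw: "(w, z) \<in> ?R'\<^sup>* \<longleftrightarrow> (p, z) \<in> ?R1\<^sup>*" if "z \<in> V'" for z
    proof
      assume "(w, z) \<in> ?R'\<^sup>*"
      then have "(w, z) \<in> ?R1\<^sup>*" by (rule fwd)
      then show "(p, z) \<in> ?R1\<^sup>*" using pw by (meson converse_rtrancl_into_rtrancl)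
    next
      assume "(p, z) \<in> ?R1\<^sup>*"
      then show "(w, z) \<in> ?R'\<^sup>*" using bwd[of p z] h2id[OF that] by (simp add: h2_def)
    qed
    have Xz: "(p, z) \<in> ?R1\<^sup>* \<longleftrightarrow> (u, z) \<notin> ?R1\<^sup>*" if "z \<in> V" for z
    proof
      assume pz: "(p, z) \<in> ?R1\<^sup>*"
      show "(u, z) \<notin> ?R1\<^sup>*"
      proof
        assume "(u, z) \<in> ?R1\<^sup>*"
        then have "(z, u) \<in> ?R1\<^sup>*" by (rule rt_sym)
        then show False using pz spl2 rtrancl_trans by metis
      qed
    next
      assume "(u, z) \<notin> ?R1\<^sup>*"
      then show "(p, z) \<in> ?R1\<^sup>*" using spl1 that by blast
    qed
    have lfV: "lf i \<in> V" if "i \<in> Q" for i using bij_betw_apply[OF bijL that] by (simp add: L_def)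
    have mins: "Min {u, w} = u \<or> Min {u, w} = w" "Min {p, u} = p \<or> Min {p, u} = u"
      by (simp_all add: min_def)
    have g': "gcut (Q - {q}) (V', E', lf) e' = {i\<in>Q - {q}. (Min {u, w}, lf i) \<in> ?R'\<^sup>*}"
      using True by (simp add: gcut_def)
    have g: "gcut Q (V, E, lf) f1 = {i\<in>Q. (Min {p, u}, lf i) \<in> ?R1\<^sup>*}"
      using u by (simp add: gcut_def)
    have su: "{i\<in>Q - {q}. (u, lf i) \<in> ?R'\<^sup>*} = {i\<in>Q - {q}. (u, lf i) \<in> ?R1\<^sup>*}"
      using Au lfV' by auto
    have sw: "{i\<in>Q - {q}. (w, lf i) \<in> ?R'\<^sup>*} = {i\<in>Q - {q}. (p, lf i) \<in> ?R1\<^sup>*}"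
      using Bw lfV' by auto
    have x1: "{i\<in>Q - {q}. (p, lf i) \<in> ?R1\<^sup>*} = (Q - {q}) - {i\<in>Q. (u, lf i) \<in> ?R1\<^sup>*}"
      using Xz lfV by auto
    have x2: "{i\<in>Q - {q}. (u, lf i) \<in> ?R1\<^sup>*} = (Q - {q}) - {i\<in>Q. (p, lf i) \<in> ?R1\<^sup>*}"
      using Xz lfV by auto
    have "gcut (Q - {q}) (V', E', lf) e' = gcut Q (V, E, lf) f1 \<inter> (Q - {q}) \<or>
          gcut (Q - {q}) (V', E', lf) e' = (Q - {q}) - gcut Q (V, E, lf) f1"
      using mins
    proof (elim disjE)
      assume "Min {u, w} = u" "Min {p, u} = p"
      then show ?thesis using g' g su x2 by auto
    next
      assume "Min {u, w} = u" "Min {p, u} = u"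
      then show ?thesis using g' g su by auto
    next
      assume "Min {u, w} = w" "Min {p, u} = p"
      then show ?thesis using g' g sw by auto
    next
      assume "Min {u, w} = w" "Min {p, u} = u"
      then show ?thesis using g' g sw x1 by auto
    qed
    then show ?thesis using f1P(1) by blast
  qed
  show ?thesis using G' cuts by blast
qed

lemma compose_cut:
  assumes "S \<subseteq> Q'" "g' = g1 \<inter> S \<or> g' = S - g1" "g1 = g \<inter> Q' \<or> g1 = Q' - g"
  shows "g' = g \<inter> S \<or> g' = S - g"
  using assms by blast

lemma reduce:
  assumes "gtree Q (V, E, lf)" "S \<subseteq> Q" "finite Q" "2 \<le> card S"
  shows "\<exists>V' E'. gtree S (V', E', lf) \<and>
     (\<forall>e'\<in>E'. \<exists>e\<in>E. gcut S (V', E', lf) e' = gcut Q (V, E, lf) e \<inter> S \<or>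
                     gcut S (V', E', lf) e' = S - gcut Q (V, E, lf) e)"
  using assms
proof (induction "card (Q - S)" arbitrary: Q V E)
  case 0
  then have "Q = S" by auto
  moreover have "gcut Q (V, E, lf) e \<subseteq> Q" for e by (auto simp: gcut_def)
  ultimately show ?case using 0 by blast
next
  case (Suc k)
  have "Q - S \<noteq> {}" using Suc.hyps(2) by (metis card.empty nat.simps(3))
  then obtain q where q: "q \<in> Q - S" by blast
  have "S \<subset> Q" using q Suc.prems(2) by blast
  then have "card S < card Q" using psubset_card_mono[OF Suc.prems(3)] by blast
  then have c3: "3 \<le> card Q" using Suc.prems(4) by simp
  obtain V1 E1 where r: "gtree (Q - {q}) (V1, E1, lf)"
    "\<forall>e'\<in>E1. \<exists>e\<in>E. gcut (Q - {q}) (V1, E1, lf) e' = gcut Q (V, E, lf) e \<inter> (Q - {q}) \<or>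
                     gcut (Q - {q}) (V1, E1, lf) e' = (Q - {q}) - gcut Q (V, E, lf) e"
    using remove_leaf[OF Suc.prems(1) _ Suc.prems(3) c3] q by blast
  have "Q - {q} - S = (Q - S) - {q}" by blast
  then have k: "k = card (Q - {q} - S)" using Suc.hyps(2) q Suc.prems(3)
    by (simp add: card_Diff_singleton)
  have sub: "S \<subseteq> Q - {q}" using Suc.prems(2) q by blast
  obtain V' E' where r2: "gtree S (V', E', lf)"
    "\<forall>e'\<in>E'. \<exists>e\<in>E1. gcut S (V', E', lf) e' = gcut (Q - {q}) (V1, E1, lf) e \<inter> S \<or>
                     gcut S (V', E', lf) e' = S - gcut (Q - {q}) (V1, E1, lf) e"
    using Suc.hyps(1)[OF k r(1) sub _ Suc.prems(4)] Suc.prems(3) by blast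
  have "\<forall>e'\<in>E'. \<exists>e\<in>E. gcut S (V', E', lf) e' = gcut Q (V, E, lf) e \<inter> S \<or>
                     gcut S (V', E', lf) e' = S - gcut Q (V, E, lf) e"
  proof
    fix e' assume "e' \<in> E'"
    then obtain e1 where e1: "e1 \<in> E1" "gcut S (V', E', lf) e' = gcut (Q - {q}) (V1, E1, lf) e1 \<inter> S \<or>
                     gcut S (V', E', lf) e' = S - gcut (Q - {q}) (V1, E1, lf) e1" using r2(2) by blast
    then obtain e where e: "e \<in> E" "gcut (Q - {q}) (V1, E1, lf) e1 = gcut Q (V, E, lf) e \<inter> (Q - {q}) \<or>
                     gcut (Q - {q}) (V1, E1, lf) e1 = (Q - {q}) - gcut Q (V, E, lf) e" using r(2) by blast
    have "gcut S (V', E', lf) e' = gcut Q (V, E, lf) e \<inter> S \<or>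
          gcut S (V', E', lf) e' = S - gcut Q (V, E, lf) e"
      by (rule compose_cut[OF sub e1(2) e(2)])
    then show "\<exists>e\<in>E. gcut S (V', E', lf) e' = gcut Q (V, E, lf) e \<inter> S \<or>
                     gcut S (V', E', lf) e' = S - gcut Q (V, E, lf) e" using e(1) by blast
  qed
  then show ?case using r2(1) by blast
qed

lemma card_swap: "finite S \<Longrightarrow> x \<in> S \<Longrightarrow> y \<notin> S - {x} \<Longrightarrow> card (insert y (S - {x})) = card S"
  by (metis card_Suc_Diff1 card_insert_disjoint finite_Diff)

lemma add_leaf:
  assumes G: "gtree {0..<n} (V, E, lf)" and n: "2 \<le> n"
  shows "\<exists>T. gtree {0..<Suc n} T"
proof -
  have T: "is_tree V E" and degs: "\<forall>v\<in>V. degree E v \<in> {1,3}"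
    and bij: "bij_betw lf {0..<n} {v\<in>V. degree E v = 1}"
    using G by (simp_all add: gtree_def)
  define L where "L = {v\<in>V. degree E v = 1}"
  have bijL: "bij_betw lf {0..<n} L" using bij by (simp add: L_def)
  have finE: "finite E" by (rule tree_finE[OF T])
  have finV: "finite V" by (rule treeD(1)[OF T])
  have "card L = n" using bij_betw_same_card[OF bijL] by simp
  moreover have "card L \<le> card V" using finV by (intro card_mono) (auto simp: L_def)
  ultimately have "E \<noteq> {}" using treeD(6)[OF T] n by auto
  then obtain e where eE: "e \<in> E" by blast
  obtain a b where ab: "e = {a, b}" "a \<noteq> b" using treeD(4)[OF T eE] by (meson card_2_iff)
  have aV: "a \<in> V" and bV: "b \<in> V" using treeD(3)[OF T eE] ab by auto
  define m where "m = Suc (Max V)"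
  define l' where "l' = Suc m"
  have mV: "m \<notin> V" and lV: "l' \<notin> V" and ml: "m \<noteq> l'"
    using Max_ge[OF finV] by (force simp: m_def l'_def)+
  have am: "a \<noteq> m" "b \<noteq> m" "a \<noteq> l'" "b \<noteq> l'" using aV bV mV lV by auto
  define E0 where "E0 = E - {e}"
  define E' where "E' = insert {a, m} (insert {m, b} (insert {m, l'} E0))"
  define V' where "V' = insert m (insert l' V)"
  have E0V: "f \<subseteq> V" if "f \<in> E0" for f using that treeD(3)[OF T] by (auto simp: E0_def)
  have nin: "{a, m} \<notin> E0" "{m, b} \<notin> E0" "{m, l'} \<notin> E0" using E0V mV by blast+
  have dist: "{a, m} \<noteq> {m, b}" "{a, m} \<noteq> {m, l'}" "{m, b} \<noteq> {m, l'}"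
    using ab am ml by (auto simp: doubleton_eq_iff)
  have cE0: "card E0 = card E - 1" using eE finE by (simp add: E0_def)
  have cE1: "1 \<le> card E" using eE finE by (metis One_nat_def Suc_leI card_gt_0_iff empty_iff)
  have cE': "card E' = card E0 + 3" using nin dist finE by (simp add: E'_def E0_def)
  have cV': "card V' = card V + 2" using mV lV ml finV by (simp add: V'_def)
  have cards: "card E' + 1 = card V'" using cE' cE0 cV' cE1 treeD(6)[OF T] by simp
  have E'sub: "f \<subseteq> V' \<and> card f = 2" if fE': "f \<in> E'" for f
  proof -
    consider "f = {a, m}" | "f = {m, b}" | "f = {m, l'}" | "f \<in> E0" using fE' unfolding E'_def by blast
    then show ?thesis
    proof cases
      case 4 then show ?thesis using E0V treeD(4)[OF T] by (auto simp: E0_def V'_def)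
    qed (use aV bV am ml in \<open>auto simp: V'_def\<close>)
  qed
  have inE': "{a, m} \<in> E'" "{m, a} \<in> E'" "{m, b} \<in> E'" "{b, m} \<in> E'" "{m, l'} \<in> E'"
    by (auto simp: E'_def insert_commute)
  have fromV: "(a, z) \<in> (adj E')\<^sup>*" if "z \<in> V" for z
  proof -
    have "(a, z) \<in> (adj E)\<^sup>*" using treeD(5)[OF T aV that] .
    then have "(id a, id z) \<in> (adj E')\<^sup>*"
    proof (rule rt_map_adj[rotated])
      fix s t assume st: "{s, t} \<in> E"
      show "(id s, id t) \<in> (adj E')\<^sup>*"
      proof (cases "{s, t} = e")
        case True
        then have "(s = a \<and> t = b) \<or> (s = b \<and> t = a)" using ab by (auto simp: doubleton_eq_iff)
        then show ?thesis using adj_rt2[OF inE'(1) inE'(3)] adj_rt2[OF inE'(4) inE'(2)] by auto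
      next
        case False
        then have "{s, t} \<in> E'" using st by (auto simp: E'_def E0_def)
        then show ?thesis by (auto simp: adj_def)
      qed
    qed
    then show ?thesis by simp
  qed
  have fromA: "(a, z) \<in> (adj E')\<^sup>*" if "z \<in> V'" for z
  proof -
    have "(a, m) \<in> (adj E')\<^sup>*" using inE'(1) by (auto simp: adj_def)
    moreover have "(a, l') \<in> (adj E')\<^sup>*" using adj_rt2[OF inE'(1) inE'(5)] .
    ultimately show ?thesis using that fromV by (auto simp: V'_def)
  qed
  have conn': "(x, y) \<in> (adj E')\<^sup>*" if "x \<in> V'" "y \<in> V'" for x y
    using rt_sym[OF fromA[OF that(1)]] fromA[OF that(2)] by (rule rtrancl_trans)
  have tree': "is_tree V' E'"
    unfolding is_tree_def
  proof (intro conjI)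
    show "\<forall>f\<in>E'. f \<subseteq> V' \<and> card f = 2" using E'sub by blast
    show "\<forall>x\<in>V'. \<forall>y\<in>V'. (x, y) \<in> (adj E')\<^sup>*" using conn' by blast
  qed (use finV cards in \<open>auto simp: V'_def\<close>)
  have finEv: "finite {f\<in>E. v \<in> f}" for v using finE by simp
  have mE0: "m \<notin> f" "l' \<notin> f" if "f \<in> E0" for f using E0V[OF that] mV lV by auto
  have degV: "degree E' v = degree E v" if v: "v \<in> V" for v
  proof -
    have vm: "v \<noteq> m" "v \<noteq> l'" using v mV lV by auto
    consider "v = a" | "v = b" | "v \<noteq> a" "v \<noteq> b" by blast
    then show ?thesis
    proof cases
      case 1
      have "{f\<in>E'. v\<in>f} = insert {a, m} ({f\<in>E. v\<in>f} - {e})"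
        unfolding E'_def E0_def using 1 vm ab by auto
      moreover have "{a, m} \<notin> {f\<in>E. v\<in>f} - {e}" using nin by (auto simp: E0_def)
      ultimately show ?thesis unfolding degree_def using card_swap[OF finEv[of v], of e] eE 1 ab by simp
    next
      case 2
      have "{f\<in>E'. v\<in>f} = insert {m, b} ({f\<in>E. v\<in>f} - {e})"
        unfolding E'_def E0_def using 2 vm ab by auto
      moreover have "{m, b} \<notin> {f\<in>E. v\<in>f} - {e}" using nin by (auto simp: E0_def)
      ultimately show ?thesis unfolding degree_def using card_swap[OF finEv[of v], of e] eE 2 ab by simp
    next
      case 3
      have "{f\<in>E'. v\<in>f} = {f\<in>E. v\<in>f}"
        unfolding E'_def E0_def using 3 vm ab by auto
      then show ?thesis by (simp add: degree_def)
    qed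
  qed
  have degm: "degree E' m = 3"
  proof -
    have "{f\<in>E'. m\<in>f} = {{a, m}, {m, b}, {m, l'}}" using mE0 by (auto simp: E'_def)
    then show ?thesis using dist by (simp add: degree_def)
  qed
  have degl: "degree E' l' = 1"
  proof -
    have "{f\<in>E'. l'\<in>f} = {{m, l'}}" using mE0 am ml by (auto simp: E'_def)
    then show ?thesis by (simp add: degree_def)
  qed
  have degs': "\<forall>v\<in>V'. degree E' v \<in> {1, 3}" using degs degV degm degl by (auto simp: V'_def)
  have leaves': "{v\<in>V'. degree E' v = 1} = L \<union> {l'}"
    using degV degm degl ml by (auto simp: V'_def L_def)
  define lf' where "lf' = lf(n := l')"
  have b1: "bij_betw lf' {0..<n} L"
    using bijL by (rule bij_betw_cong[THEN iffD1, rotated]) (simp add: lf'_def)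
  have b2: "bij_betw lf' {n} {l'}" by (simp add: lf'_def bij_betw_def)
  have "L \<inter> {l'} = {}" using lV by (auto simp: L_def)
  then have "bij_betw lf' ({0..<n} \<union> {n}) (L \<union> {l'})" using bij_betw_combine[OF b1 b2] by simp
  moreover have "{0..<n} \<union> {n} = {0..<Suc n}" by auto
  ultimately have bij': "bij_betw lf' {0..<Suc n} {v\<in>V'. degree E' v = 1}" using leaves' by simp
  show ?thesis using tree' degs' bij' unfolding gtree_def by blast
qed

lemma exists_tree:
  assumes "2 \<le> n"
  shows "\<exists>T. gtree {0..<n} T"
  using assms
proof (induction n rule: dec_induct)
  case base
  define T :: ltree where "T = ({0, 1}, {{0, 1}}, id)"
  have tr: "is_tree {0, 1} {{0 :: nat, 1}}"
    unfolding is_tree_def by (auto simp: adj_def insert_commute intro: r_into_rtrancl)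
  have d: "degree {{0 :: nat, 1}} v = 1" if "v \<in> {0, 1}" for v
  proof -
    have "{f \<in> {{0 :: nat, 1}}. v \<in> f} = {{0, 1}}" using that by auto
    then show ?thesis by (simp add: degree_def)
  qed
  have "{v \<in> {0 :: nat, 1}. degree {{0, 1}} v = 1} = {0, 1}" using d by auto
  moreover have "bij_betw id {0..<2} {0 :: nat, 1}" by (auto simp: bij_betw_def)
  ultimately have "gtree {0..<2} T" using tr d by (simp add: gtree_def T_def)
  then show ?case by blast
next
  case (step n)
  then obtain V E lf where "gtree {0..<n} (V, E, lf)" by (metis prod_cases3)
  then show ?case using add_leaf step(1) by blast
qed

definition val :: "nat \<Rightarrow> qvec \<Rightarrow> ltree \<Rightarrow> real" where
  "val n psi T = Max {log 2 (real (schmidt_rank n (cut_side n T e) psi)) | e. e \<in> tree_edges T}"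

lemma srw_val: "srw n psi = Min {val n psi T | T. subcubic_tree n T}"
  by (simp add: srw_def val_def)

lemma edges_ok:
  assumes "subcubic_tree n T" "2 \<le> n"
  shows "finite (tree_edges T)" "tree_edges T \<noteq> {}"
proof -
  obtain V E lf where T: "T = (V, E, lf)" by (cases T)
  have tr: "is_tree V E" and bij: "bij_betw lf {0..<n} {v\<in>V. degree E v = 1}"
    using assms(1) by (simp_all add: T subcubic_tree_def)
  show "finite (tree_edges T)" using tree_finE[OF tr] by (simp add: T tree_edges_def)
  have "card {v\<in>V. degree E v = 1} = n" using bij_betw_same_card[OF bij] by simp
  moreover have "card {v\<in>V. degree E v = 1} \<le> card V" using treeD(1)[OF tr] by (intro card_mono) auto
  ultimately have "E \<noteq> {}" using treeD(6)[OF tr] assms(2) by auto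
  then show "tree_edges T \<noteq> {}" by (simp add: T tree_edges_def)
qed

lemma cut_sub: "cut_side n T e \<subseteq> {0..<n}" by (cases T) (auto simp: cut_side_def)

lemma rank_bound:
  assumes "A \<subseteq> {0..<n}"
  shows "schmidt_rank n A psi \<le> 2 ^ n"
proof -
  let ?C = "(\<lambda>x'. \<lambda>x. rho n A psi x x') ` cfg A"
  have finA: "finite A" using assms finite_subset by blast
  have "schmidt_rank n A psi = cs.dim ?C" by (simp add: schmidt_rank_def cols_eq)
  also have "\<dots> \<le> card ?C" by (rule cs.dim_le_card) (auto intro: cs.span_base finite_cfg[OF finA])
  also have "\<dots> \<le> card (cfg A)" by (rule card_image_le[OF finite_cfg[OF finA]])
  also have "card (cfg A) = 2 ^ card A" by (simp add: cfg_def card_PiE[OF finA] card_UNIV_bool)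
  also have "\<dots> \<le> 2 ^ n" using card_mono[OF _ assms] by simp
  finally show ?thesis .
qed

lemma val_in:
  assumes "subcubic_tree n T" "2 \<le> n"
  shows "val n psi T \<in> (\<lambda>k. log 2 (real k)) ` {..2 ^ n}"
proof -
  let ?S = "{log 2 (real (schmidt_rank n (cut_side n T e) psi)) | e. e \<in> tree_edges T}"
  have "finite ?S" "?S \<noteq> {}" using edges_ok[OF assms] by auto
  then have "Max ?S \<in> ?S" by (rule Max_in)
  then obtain e where "val n psi T = log 2 (real (schmidt_rank n (cut_side n T e) psi))"
    by (auto simp: val_def)
  moreover have "schmidt_rank n (cut_side n T e) psi \<le> 2 ^ n" by (rule rank_bound[OF cut_sub])
  ultimately show ?thesis by auto
qed

lemma vals_finite: "2 \<le> n \<Longrightarrow> finite {val n psi T | T. subcubic_tree n T}"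
  by (rule finite_subset[of _ "(\<lambda>k. log 2 (real k)) ` {..2 ^ n}"]) (auto dest: val_in)

lemma srw_le:
  assumes "subcubic_tree n T" "2 \<le> n"
  shows "srw n psi \<le> val n psi T"
proof -
  have "val n psi T \<in> {val n psi T | T. subcubic_tree n T}" using assms(1) by blast
  then show ?thesis unfolding srw_val by (rule Min_le[OF vals_finite[OF assms(2)]])
qed

lemma srw_att:
  assumes "2 \<le> n"
  shows "\<exists>T. subcubic_tree n T \<and> srw n psi = val n psi T"
proof -
  obtain T where "subcubic_tree n T" using exists_tree[OF assms] subcubic_gtree by blast
  then have ne: "{val n psi T | T. subcubic_tree n T} \<noteq> {}" by blast
  have "srw n psi \<in> {val n psi T | T. subcubic_tree n T}"
    unfolding srw_val by (rule Min_in[OF vals_finite[OF assms] ne])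
  then show ?thesis by auto
qed

lemma log_mono_nat: "(a::nat) \<le> b \<Longrightarrow> log 2 (real a) \<le> log 2 (real b)"
proof (cases "a = 0")
  case True
  assume "a \<le> b"
  show ?thesis
  proof (cases "b = 0")
    case False then show ?thesis using True by (simp add: log_def)
  qed (use True in simp)
next
  case False
  assume "a \<le> b"
  then show ?thesis using False by simp
qed

lemma val_le_gen:
  assumes T: "subcubic_tree n T" "2 \<le> n" and T2: "subcubic_tree N T2" "2 \<le> N"
    and le: "\<And>e. e \<in> tree_edges T \<Longrightarrow> \<exists>e2\<in>tree_edges T2.
      schmidt_rank n (cut_side n T e) phi \<le> schmidt_rank N (cut_side N T2 e2) psi"
  shows "val n phi T \<le> val N psi T2"
proof -
  let ?S = "{log 2 (real (schmidt_rank n (cut_side n T e) phi)) | e. e \<in> tree_edges T}"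
  let ?S2 = "{log 2 (real (schmidt_rank N (cut_side N T2 e) psi)) | e. e \<in> tree_edges T2}"
  have f: "finite ?S" "?S \<noteq> {}" using edges_ok[OF T] by auto
  have f2: "finite ?S2" "?S2 \<noteq> {}" using edges_ok[OF T2] by auto
  show ?thesis unfolding val_def
  proof (subst Max_le_iff[OF f], intro ballI)
    fix x assume "x \<in> ?S"
    then obtain e where e: "e \<in> tree_edges T" "x = log 2 (real (schmidt_rank n (cut_side n T e) phi))" by auto
    obtain e2 where e2: "e2 \<in> tree_edges T2"
      "schmidt_rank n (cut_side n T e) phi \<le> schmidt_rank N (cut_side N T2 e2) psi" using le[OF e(1)] by blast
    have "x \<le> log 2 (real (schmidt_rank N (cut_side N T2 e2) psi))" using e(2) log_mono_nat[OF e2(2)] by simp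
    also have "\<dots> \<le> Max ?S2" by (rule Max_ge[OF f2(1)]) (use e2(1) in auto)
    finally show "x \<le> Max ?S2" .
  qed
qed

lemma dom_srw:
  assumes n: "2 \<le> n" and d: "\<And>A r. A \<subseteq> {0..<n} \<Longrightarrow> has_dec n A psi r \<Longrightarrow> has_dec n A phi r"
  shows "srw n phi \<le> srw n psi"
proof -
  obtain T where T: "subcubic_tree n T" "srw n psi = val n psi T" using srw_att[OF n] by blast
  have "srw n phi \<le> val n phi T" by (rule srw_le[OF T(1) n])
  also have "\<dots> \<le> val n psi T"
  proof (rule val_le_gen[OF T(1) n T(1) n])
    fix e assume "e \<in> tree_edges T"
    moreover have "schmidt_rank n (cut_side n T e) phi \<le> schmidt_rank n (cut_side n T e) psi"
      by (rule rank_mono_dec[OF cut_sub d[OF cut_sub]])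
    ultimately show "\<exists>e2\<in>tree_edges T. schmidt_rank n (cut_side n T e) phi \<le> schmidt_rank n (cut_side n T e2) psi"
      by blast
  qed
  finally show ?thesis using T(2) by simp
qed

lemma embed_srw:
  assumes n: "2 \<le> n" "n \<le> N" and sg: "inj_on sg {0..<n}" "sg ` {0..<n} \<subseteq> {0..<N}"
    and d: "\<And>A r. A \<subseteq> {0..<N} \<Longrightarrow> has_dec N A psi r \<Longrightarrow> has_dec N A (embed N n sg psi') r"
  shows "srw n psi' \<le> srw N psi"
proof -
  have N: "2 \<le> N" using n by simp
  obtain T where T: "subcubic_tree N T" "srw N psi = val N psi T" using srw_att[OF N] by blast
  obtain V E lf where TT: "T = (V, E, lf)" by (cases T)
  let ?S = "sg ` {0..<n}"
  have cS: "card ?S = n" using card_image[OF sg(1)] by simp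
  have G: "gtree {0..<N} (V, E, lf)" using T(1) TT subcubic_gtree by simp
  obtain V' E' where r: "gtree ?S (V', E', lf)"
    "\<forall>e'\<in>E'. \<exists>e\<in>E. gcut ?S (V', E', lf) e' = gcut {0..<N} (V, E, lf) e \<inter> ?S \<or>
                     gcut ?S (V', E', lf) e' = ?S - gcut {0..<N} (V, E, lf) e"
    using reduce[OF G sg(2) _ ] cS n by auto
  define T2 :: ltree where "T2 = (V', E', lf \<circ> sg)"
  have bsg: "bij_betw sg {0..<n} ?S" using sg(1) by (simp add: bij_betw_def)
  have r1: "is_tree V' E'" "\<forall>v\<in>V'. degree E' v \<in> {1, 3}" "bij_betw lf ?S {v\<in>V'. degree E' v = 1}"
    using r(1) by (simp_all add: gtree_def)
  have T2: "subcubic_tree n T2"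
    using r1 bij_betw_trans[OF bsg r1(3)] unfolding subcubic_tree_def T2_def by simp
  have cut2: "cut_side n T2 e' = {j\<in>{0..<n}. sg j \<in> gcut ?S (V', E', lf) e'}" for e'
    by (auto simp: cut_side_def gcut_def T2_def)
  have "val n psi' T2 \<le> val N psi T"
  proof (rule val_le_gen[OF T2 n(1) T(1) N])
    fix e' assume e': "e' \<in> tree_edges T2"
    then have "e' \<in> E'" by (simp add: T2_def tree_edges_def)
    then obtain e where e: "e \<in> E" "gcut ?S (V', E', lf) e' = gcut {0..<N} (V, E, lf) e \<inter> ?S \<or>
                     gcut ?S (V', E', lf) e' = ?S - gcut {0..<N} (V, E, lf) e" using r(2) by blast
    define A where "A = cut_side N T e"
    have Ag: "A = gcut {0..<N} (V, E, lf) e" by (simp add: A_def TT cut_gcut)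
    have A: "A \<subseteq> {0..<N}" by (simp add: A_def cut_sub)
    define A' where "A' = {j\<in>{0..<n}. sg j \<in> A}"
    have A': "A' \<subseteq> {0..<n}" by (auto simp: A'_def)
    have c: "cut_side n T2 e' = A' \<or> cut_side n T2 e' = {0..<n} - A'"
      using e(2) unfolding cut2 A'_def Ag by auto
    have "schmidt_rank n (cut_side n T2 e') psi' = schmidt_rank n A' psi'"
      using c rank_sym[OF A'] by auto
    also have "\<dots> \<le> schmidt_rank N A (embed N n sg psi')"
      unfolding A'_def by (rule R1[OF D_embed[OF sg A R2[OF A]]])
    also have "\<dots> \<le> schmidt_rank N A psi"
      by (rule rank_mono_dec[OF A d[OF A]])
    finally have "schmidt_rank n (cut_side n T2 e') psi' \<le> schmidt_rank N (cut_side N T e) psi"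
      by (simp add: A_def)
    moreover have "e \<in> tree_edges T" using e(1) by (simp add: TT tree_edges_def)
    ultimately show "\<exists>e2\<in>tree_edges T. schmidt_rank n (cut_side n T2 e') psi' \<le> schmidt_rank N (cut_side N T e2) psi"
      by blast
  qed
  then show ?thesis using srw_le[OF T2 n(1), of psi'] T(2) by simp
qed

lemma part1:
  assumes n: "2 \<le> n" "n \<le> N" and sl: "slocc_to N psi n psi'"
  shows "srw n psi' \<le> srw N psi"
proof -
  obtain K sg c where c: "c \<noteq> 0" and sg: "inj_on sg {0..<n}" "sg ` {0..<n} \<subseteq> {0..<N}"
    and eq: "\<forall>x\<in>cfg {0..<N}. apply_prod N K psi x = c * embed N n sg psi' x"
    using sl unfolding slocc_to_def by blast
  show ?thesis
  proof (rule embed_srw[OF n sg])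
    fix A r assume A: "A \<subseteq> {0..<N}" and d: "has_dec N A psi r"
    have "has_dec N A (\<lambda>z. inverse c * apply_prod N K psi z) r"
      by (rule D_scale[OF D_prod[OF A d]])
    then show "has_dec N A (embed N n sg psi') r"
      by (rule D_cong[OF A, rotated]) (use eq c in simp)
  qed
qed

lemma SPLITK:
  assumes k: "k \<in> S" and S: "finite S"
  shows "(\<Sum>z\<in>cfg S. F z) = (\<Sum>y\<in>cfg (S - {k}). \<Sum>c\<in>UNIV. F (y(k := c)))"
proof -
  have bij: "bij_betw (\<lambda>(y, c). y(k := c)) (cfg (S - {k}) \<times> UNIV) (cfg S)"
  proof (rule bij_betwI')
    fix p q assume p: "p \<in> cfg (S - {k}) \<times> (UNIV :: bool set)" and q: "q \<in> cfg (S - {k}) \<times> (UNIV :: bool set)"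
    obtain y c where py: "p = (y, c)" by (cases p)
    obtain y' c' where qy: "q = (y', c')" by (cases q)
    have yk: "y k = undefined" "y' k = undefined" using p q py qy by (auto simp: cfg_iff)
    show "((case p of (y, c) \<Rightarrow> y(k := c)) = (case q of (y, c) \<Rightarrow> y(k := c))) = (p = q)"
    proof
      assume e: "(case p of (y, c) \<Rightarrow> y(k := c)) = (case q of (y, c) \<Rightarrow> y(k := c))"
      then have "y(k := c) = y'(k := c')" using py qy by simp
      then have "c = c'" "y = y'" using yk by (auto simp: fun_eq_iff split: if_splits)
      then show "p = q" using py qy by simp
    qed simp
  next
    fix p assume p: "p \<in> cfg (S - {k}) \<times> (UNIV :: bool set)"
    obtain y c where py: "p = (y, c)" by (cases p)
    have y: "y \<in> cfg (S - {k})" using p py by simp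
    have "y(k := c) \<in> cfg S" unfolding cfg_iff
    proof (intro allI impI)
      fix i assume "i \<notin> S"
      then have "i \<noteq> k" "i \<notin> S - {k}" using k by auto
      then show "(y(k := c)) i = undefined" using y unfolding cfg_iff by simp
    qed
    then show "(case p of (y, c) \<Rightarrow> y(k := c)) \<in> cfg S" using py by simp
  next
    fix z assume z: "z \<in> cfg S"
    show "\<exists>p\<in>cfg (S - {k}) \<times> UNIV. z = (case p of (y, c) \<Rightarrow> y(k := c))"
    proof (rule bexI[of _ "(z(k := undefined), z k)"])
      show "z = (case (z(k := undefined), z k) of (y, c) \<Rightarrow> y(k := c))" by simp
      show "(z(k := undefined), z k) \<in> cfg (S - {k}) \<times> UNIV" using z by (auto simp: cfg_iff)
    qed
  qed
  have "(\<Sum>z\<in>cfg S. F z) = (\<Sum>p\<in>cfg (S - {k}) \<times> UNIV. F (case p of (y, c) \<Rightarrow> y(k := c)))"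
    using sum.reindex_bij_betw[OF bij, of F] by simp
  also have "\<dots> = (\<Sum>y\<in>cfg (S - {k}). \<Sum>c\<in>UNIV. F (y(k := c)))"
    by (subst sum.cartesian_product) (simp add: split_def)
  finally show ?thesis .
qed

lemma KI0:
  fixes Ks :: "op1 list" and ps :: "bool \<Rightarrow> complex"
  assumes kc: "kraus_complete Ks"
  shows "(\<Sum>j<length Ks. \<Sum>c\<in>UNIV. (cmod (\<Sum>b\<in>UNIV. (Ks ! j) c b * ps b))\<^sup>2) = (\<Sum>b\<in>UNIV. (cmod (ps b))\<^sup>2)"
proof -
  have kc': "(\<Sum>j<length Ks. \<Sum>c\<in>UNIV. cnj ((Ks ! j) c a) * (Ks ! j) c b) = (if a = b then 1 else 0)" for a b
    using kc unfolding kraus_complete_def by (simp add: sum_list_sum_nth atLeast0LessThan)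
  have sq: "complex_of_real ((cmod z)\<^sup>2) = cnj z * z" for z
    using complex_norm_square[of z] by (simp add: mult.commute)
  have "complex_of_real (\<Sum>j<length Ks. \<Sum>c\<in>UNIV. (cmod (\<Sum>b\<in>UNIV. (Ks ! j) c b * ps b))\<^sup>2)
      = (\<Sum>j<length Ks. \<Sum>c\<in>UNIV. cnj (\<Sum>a\<in>UNIV. (Ks ! j) c a * ps a) * (\<Sum>b\<in>UNIV. (Ks ! j) c b * ps b))"
    by (simp only: of_real_sum sq)
  also have "\<dots> = (\<Sum>j<length Ks. \<Sum>c\<in>UNIV. \<Sum>a\<in>UNIV. \<Sum>b\<in>UNIV. (cnj (ps a) * ps b) * (cnj ((Ks ! j) c a) * (Ks ! j) c b))"
  proof -
    have "(\<Sum>j<length Ks. \<Sum>c\<in>UNIV. cnj (\<Sum>a\<in>UNIV. (Ks ! j) c a * ps a) * (\<Sum>b\<in>UNIV. (Ks ! j) c b * ps b))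
       = (\<Sum>j<length Ks. \<Sum>c\<in>UNIV. \<Sum>a\<in>UNIV. \<Sum>b\<in>UNIV. cnj ((Ks ! j) c a * ps a) * ((Ks ! j) c b * ps b))"
      by (intro sum.cong refl) (simp only: cnj_sum sum_product)
    also have "\<dots> = (\<Sum>j<length Ks. \<Sum>c\<in>UNIV. \<Sum>a\<in>UNIV. \<Sum>b\<in>UNIV. (cnj (ps a) * ps b) * (cnj ((Ks ! j) c a) * (Ks ! j) c b))"
      by (intro sum.cong refl) (simp add: mult_ac)
    finally show ?thesis .
  qed
  also have "\<dots> = (\<Sum>a\<in>UNIV. \<Sum>b\<in>UNIV. (cnj (ps a) * ps b) * (\<Sum>j<length Ks. \<Sum>c\<in>UNIV. cnj ((Ks ! j) c a) * (Ks ! j) c b))"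
  proof -
    have "(\<Sum>j<length Ks. \<Sum>c\<in>UNIV. \<Sum>a\<in>UNIV. \<Sum>b\<in>UNIV. (cnj (ps a) * ps b) * (cnj ((Ks ! j) c a) * (Ks ! j) c b))
        = (\<Sum>j<length Ks. \<Sum>a\<in>UNIV. \<Sum>b\<in>UNIV. \<Sum>c\<in>UNIV. (cnj (ps a) * ps b) * (cnj ((Ks ! j) c a) * (Ks ! j) c b))"
      by (rule sum.cong[OF refl], subst sum.swap, rule sum.cong[OF refl], rule sum.swap)
    also have "\<dots> = (\<Sum>a\<in>UNIV. \<Sum>b\<in>UNIV. \<Sum>j<length Ks. \<Sum>c\<in>UNIV. (cnj (ps a) * ps b) * (cnj ((Ks ! j) c a) * (Ks ! j) c b))"
      by (subst sum.swap) (intro sum.cong refl, rule sum.swap)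
    also have "\<dots> = (\<Sum>a\<in>UNIV. \<Sum>b\<in>UNIV. (cnj (ps a) * ps b) * (\<Sum>j<length Ks. \<Sum>c\<in>UNIV. cnj ((Ks ! j) c a) * (Ks ! j) c b))"
      by (simp add: sum_distrib_left)
    finally show ?thesis .
  qed
  also have "\<dots> = (\<Sum>a\<in>UNIV. cnj (ps a) * ps a)"
  proof -
    have dl: "(\<Sum>b\<in>UNIV. f b * (if a = b then 1 else 0)) = f a" for f :: "bool \<Rightarrow> complex" and a
      by (cases a) (simp_all add: UNIV_bool)
    show ?thesis by (simp only: kc' dl)
  qed
  also have "\<dots> = complex_of_real (\<Sum>b\<in>UNIV. (cmod (ps b))\<^sup>2)"
    by (simp only: of_real_sum sq)
  finally show ?thesis by (simp only: of_real_eq_iff)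
qed

lemma KI:
  assumes kc: "kraus_complete Ks" and k: "k < n"
  shows "(\<Sum>j<length Ks. norm2 n (apply_local k (Ks ! j) psi)) = norm2 n psi"
proof -
  have kS: "k \<in> {0..<n}" using k by simp
  let ?Y = "cfg ({0..<n} - {k})"
  have "(\<Sum>j<length Ks. norm2 n (apply_local k (Ks ! j) psi))
      = (\<Sum>j<length Ks. \<Sum>y\<in>?Y. \<Sum>c\<in>UNIV. (cmod (\<Sum>b\<in>UNIV. (Ks ! j) c b * psi (y(k := b))))\<^sup>2)"
    unfolding norm2_def apply_local_def by (subst SPLITK[OF kS]) simp_all
  also have "\<dots> = (\<Sum>y\<in>?Y. \<Sum>j<length Ks. \<Sum>c\<in>UNIV. (cmod (\<Sum>b\<in>UNIV. (Ks ! j) c b * psi (y(k := b))))\<^sup>2)"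
    by (rule sum.swap)
  also have "\<dots> = (\<Sum>y\<in>?Y. \<Sum>b\<in>UNIV. (cmod (psi (y(k := b))))\<^sup>2)"
    by (intro sum.cong refl) (rule KI0[OF kc])
  also have "\<dots> = norm2 n psi"
    unfolding norm2_def by (subst SPLITK[OF kS]) simp_all
  finally show ?thesis .
qed

lemma norm2_nonneg: "0 \<le> norm2 n v"
  unfolding norm2_def by (rule sum_nonneg) simp

lemma D_normalize:
  assumes A: "A \<subseteq> {0..<n}" and d: "has_dec n A v r"
  shows "has_dec n A (normalize n v) r"
proof -
  have "has_dec n A (\<lambda>z. inverse (complex_of_real (sqrt (norm2 n v))) * v z) r" by (rule D_scale[OF d])
  moreover have "(\<lambda>z. inverse (complex_of_real (sqrt (norm2 n v))) * v z) = normalize n v"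
    by (simp add: normalize_def fun_eq_iff divide_inverse mult.commute)
  ultimately show ?thesis by simp
qed

lemma sum_list_concat_map: "sum_list (map f (concat xss)) = sum_list (map (\<lambda>xs. sum_list (map f xs)) xss)"
  by (induction xss) auto

lemma sum_list_scale:
  "sum_list (map (\<lambda>(p, phi). p * g phi) (map (\<lambda>(q, phi). (c * q, phi)) xs)) =
   (c :: real) * sum_list (map (\<lambda>(p, phi). p * g phi) xs)"
  by (induction xs) (auto simp: algebra_simps)

lemma upt_sum: "sum_list (map f [0..<m]) = (\<Sum>j<m. f j)"
  by (simp add: interv_sum_list_conv_sum_set_nat atLeast0LessThan)

lemma pos_exists:
  assumes "qstate n psi" "k < n" "kraus_complete Ks"
  shows "\<exists>j<length Ks. 0 < norm2 n (apply_local k (Ks ! j) psi)"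
proof (rule ccontr)
  assume "\<not> ?thesis"
  then have "\<forall>j<length Ks. norm2 n (apply_local k (Ks ! j) psi) = 0"
    using norm2_nonneg[of n] by (metis linorder_not_less order_antisym)
  then have "(\<Sum>j<length Ks. norm2 n (apply_local k (Ks ! j) psi)) = 0" by simp
  then show False using KI[OF assms(3,2), of psi] assms(1) by (simp add: qstate_def)
qed

lemma concat_mem: "x \<in> set (concat (map g xs)) \<Longrightarrow> \<exists>i\<in>set xs. x \<in> set (g i)"
  by auto

lemma concat_ne: "i \<in> set xs \<Longrightarrow> g i \<noteq> [] \<Longrightarrow> concat (map g xs) \<noteq> []"
  by auto

lemma locc_props:
  assumes "locc n psi L"
  shows "L \<noteq> [] \<and> (\<forall>x\<in>set L. \<forall>A r. A \<subseteq> {0..<n} \<longrightarrow> has_dec n A psi r \<longrightarrow> has_dec n A (snd x) r)"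
  using assms
proof (induction rule: locc.induct)
  case (locc_stop psi)
  then show ?case by simp
next
  case (locc_round psi k Ks Ls)
  let ?nj = "\<lambda>j. norm2 n (apply_local k (Ks ! j) psi)"
  let ?phi = "\<lambda>j. normalize n (apply_local k (Ks ! j) psi)"
  let ?g = "\<lambda>j. if 0 < ?nj j then map (\<lambda>(q, phi). (?nj j * q, phi)) (Ls j) else []"
  have IH: "Ls j \<noteq> []" "\<And>x A r. x \<in> set (Ls j) \<Longrightarrow> A \<subseteq> {0..<n} \<Longrightarrow> has_dec n A (?phi j) r \<Longrightarrow> has_dec n A (snd x) r"
    if "j < length Ks" "0 < ?nj j" for j
  proof -
    note H = locc_round(4)[rule_format, OF that]
    show "Ls j \<noteq> []" using H by (rule conjunct1[OF conjunct2])
    show "\<And>x A r. x \<in> set (Ls j) \<Longrightarrow> A \<subseteq> {0..<n} \<Longrightarrow> has_dec n A (?phi j) r \<Longrightarrow> has_dec n A (snd x) r"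
      using H[THEN conjunct2, THEN conjunct2] by blast
  qed
  obtain j where j: "j < length Ks" "0 < ?nj j" using pos_exists[OF locc_round(1,2,3)] by blast
  have "?g j \<noteq> []" using IH(1)[OF j] j(2) by simp
  moreover have "j \<in> set [0..<length Ks]" using j(1) by simp
  ultimately have ne: "concat (map ?g [0..<length Ks]) \<noteq> []" by (intro concat_ne)
  have dec: "has_dec n A (snd x) r"
    if x: "x \<in> set (concat (map ?g [0..<length Ks]))" and A: "A \<subseteq> {0..<n}" and d: "has_dec n A psi r" for x A r
  proof -
    obtain i where i0: "i \<in> set [0..<length Ks]" "x \<in> set (?g i)"
      using concat_mem[OF x] by (rule bexE)
    have i: "i < length Ks" "x \<in> set (?g i)" using i0 by simp_all
    have pos: "0 < ?nj i" using i(2) by (cases "0 < ?nj i") auto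
    then have "x \<in> set (map (\<lambda>(q, phi). (?nj i * q, phi)) (Ls i))" using i(2) by simp
    then obtain y where y: "y \<in> set (Ls i)" "snd x = snd y" by (auto split: prod.splits)
    have "has_dec n A (?phi i) r"
      by (rule D_normalize[OF A D_local[OF A locc_round(2) d]])
    then have "has_dec n A (snd y) r" by (rule IH(2)[OF i(1) pos y(1) A])
    then show ?thesis using y(2) by simp
  qed
  show ?case
  proof (intro conjI ballI allI impI)
    show "concat (map ?g [0..<length Ks]) \<noteq> []" by (rule ne)
  next
    fix x A r assume "x \<in> set (concat (map ?g [0..<length Ks]))" "A \<subseteq> {0..<n}" "has_dec n A psi r"
    then show "has_dec n A (snd x) r" by (rule dec)
  qed
qed

lemma typeI_ind:
  assumes "locc n psi L" "2 \<le> n"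
  shows "(\<Sum>(p, phi)\<leftarrow>L. p * srw n phi) \<le> srw n psi"
  using assms
proof (induction rule: locc.induct)
  case (locc_stop psi)
  then show ?case by simp
next
  case (locc_round psi k Ks Ls)
  let ?nj = "\<lambda>j. norm2 n (apply_local k (Ks ! j) psi)"
  let ?phi = "\<lambda>j. normalize n (apply_local k (Ks ! j) psi)"
  let ?f = "\<lambda>(p, phi). p * srw n phi"
  let ?g = "\<lambda>j. if 0 < ?nj j then map (\<lambda>(q, phi). (?nj j * q, phi)) (Ls j) else []"
  have termj: "sum_list (map ?f (?g j)) \<le> ?nj j * srw n psi" if j: "j < length Ks" for j
  proof (cases "0 < ?nj j")
    case True
    have "sum_list (map ?f (?g j)) = ?nj j * sum_list (map ?f (Ls j))"
      using True sum_list_scale[of "srw n"] by simp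
    also have "\<dots> \<le> ?nj j * srw n (?phi j)"
      using locc_round(4) j True locc_round(5) by (intro mult_left_mono) auto
    also have "\<dots> \<le> ?nj j * srw n psi"
    proof (intro mult_left_mono)
      show "srw n (?phi j) \<le> srw n psi"
        by (rule dom_srw[OF locc_round(5)]) (rule D_normalize, assumption, rule D_local, assumption, rule locc_round(2))
    qed (use True in simp)
    finally show ?thesis .
  next
    case False
    then have "?nj j = 0" using norm2_nonneg[of n "apply_local k (Ks ! j) psi"] by linarith
    then show ?thesis using False by simp
  qed
  have "(\<Sum>(p, phi)\<leftarrow>concat (map ?g [0..<length Ks]). p * srw n phi) = (\<Sum>j<length Ks. sum_list (map ?f (?g j)))"
    by (simp only: sum_list_concat_map map_map o_def upt_sum)
  also have "\<dots> \<le> (\<Sum>j<length Ks. ?nj j * srw n psi)"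
    by (rule sum_mono) (use termj in simp)
  also have "\<dots> = (\<Sum>j<length Ks. ?nj j) * srw n psi" by (simp add: sum_distrib_right)
  also have "\<dots> = srw n psi" using KI[OF locc_round(3,2), of psi] locc_round(1) by (simp add: qstate_def)
  finally show ?case .
qed

theorem theorem4:
  shows "(\<forall>N n psi psi'. 2 \<le> n \<longrightarrow> n \<le> N \<longrightarrow> qstate N psi \<longrightarrow> qstate n psi' \<longrightarrow>
            slocc_to N psi n psi' \<longrightarrow> srw N psi \<ge> srw n psi')
         \<and> type_I_monotone srw \<and> type_II_monotone srw"
proof (intro conjI)
  show "\<forall>N n psi psi'. 2 \<le> n \<longrightarrow> n \<le> N \<longrightarrow> qstate N psi \<longrightarrow> qstate n psi' \<longrightarrow>
            slocc_to N psi n psi' \<longrightarrow> srw N psi \<ge> srw n psi'"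
    using part1 by blast
  show "type_I_monotone srw"
    unfolding type_I_monotone_def using typeI_ind by blast
  show "type_II_monotone srw"
    unfolding type_II_monotone_def
  proof (intro allI impI)
    fix N psi n psi'
    assume n: "2 \<le> n" and q1: "qstate N psi" and q2: "qstate n psi'" and lg: "locc_geq N psi n psi'"
    obtain sg L where nN: "n \<le> N" and sg: "inj_on sg {0..<n}" "sg ` {0..<n} \<subseteq> {0..<N}"
      and L: "locc N psi L"
      and br: "\<forall>(p, phi)\<in>set L. \<exists>c. cmod c = 1 \<and> (\<forall>x\<in>cfg {0..<N}. phi x = c * embed N n sg psi' x)"
      using lg unfolding locc_geq_def by blast
    obtain x where x: "x \<in> set L" using locc_props[OF L] by (cases L) auto
    obtain c where c: "cmod c = 1" "\<forall>z\<in>cfg {0..<N}. snd x z = c * embed N n sg psi' z"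
      using br x by (cases x) auto
    have c0: "c \<noteq> 0" using c(1) by auto
    show "srw N psi \<ge> srw n psi'"
    proof (rule embed_srw[OF n nN sg])
      fix A r assume A: "A \<subseteq> {0..<N}" and d: "has_dec N A psi r"
      have "has_dec N A (snd x) r" using locc_props[OF L] x A d by blast
      then have "has_dec N A (\<lambda>z. inverse c * snd x z) r" by (rule D_scale)
      then show "has_dec N A (embed N n sg psi') r"
        by (rule D_cong[OF A, rotated]) (use c c0 in simp)
    qed
  qed
qed

end
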